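(* Let $C_0,\beta_h,\gamma_h,\beta_v,\gamma_v>0$ with $\mathcal{R}_0=\sqrt{\frac{\beta_h}{\gamma_v}\cdot\frac{C_0\beta_v}{\gamma_h}}>1$. Let \[i_h^e=\frac{C_0\beta_h\beta_v-\gamma_h\gamma_v}{C_0\beta_h\beta_v+\beta_v\gamma_h},\quad i_v^e=\frac{C_0\beta_h\beta_v-\gamma_h\gamma_v}{\beta_h\beta_v+\beta_h\gamma_v},\quad s_h^e=1-i_h^e,\quad s_v^e=C_0-i_v^e,\] \[C_e=\begin{pmatrix}-(\gamma_h+\beta_h i_v^e)&0&\beta_h s_h^e\\-\beta_v s_v^e&-\beta_v i_h^e&\gamma_v\\ \beta_v s_v^e&\beta_v i_h^e&-\gamma_v\end{pmatrix},\quad \sigma_e=\begin{pmatrix}\sqrt{\beta_h i_v^e s_h^e+\gamma_h i_h^e}&0&0&0\\0&\sqrt{\gamma_v(C_0+s_v^e)}&-\sqrt{\beta_v i_h^e s_v^e}&0\\0&0&\sqrt{\beta_v i_h^e s_v^e}&\sqrt{\gamma_v i_v^e}\end{pmatrix}.\] Let $\mathbf{B}$ be a 4-dimensional standard Brownian motion and $\Phi(0)$ a random vector in $\mathbb{R}^3$ with finite second moments, independent of $\mathbf{B}$, and let $\Phi(t)=(\hat I_h(t),\hat S_v(t),\hat I_v(t))$ solve $d\Phi(t)=C_e\Phi(t)\,dt+\sigma_e\,d\mathbf{B}(t)$. Then the variances of $\hat I_h(t)$, $\hat S_v(t)$ and $\hat I_v(t)$ tend to $\infty$ as $t\to\inf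ty$.
   Context: This is the diffusion limit of a stochastic vector-borne SIS model (random vector population size, Case I scaling, zero second-order parameter corrections) linearized at the endemic equilibrium $(i_h^e,i_v^e)$ of the fluid limit $i_h'=\beta_h i_v(1-i_h)-\gamma_h i_h$, $i_v'=\beta_v i_h(C_0-i_v)-\gamma_v i_v$. *)

theory Defs
  imports "HOL-Probability.Probability"
begin

definition ih_e :: "real \<Rightarrow> real \<Rightarrow> real \<Rightarrow> real \<Rightarrow> real \<Rightarrow> real" where
  "ih_e C0 bh gh bv gv = (C0*bh*bv - gh*gv) / (C0*bh*bv + bv*gh)"

definition iv_e :: "real \<Rightarrow> real \<Rightarrow> real \<Rightarrow> real \<Rightarrow> real \<Rightarrow> real" where
  "iv_e C0 bh gh bv gv = (C0*bh*bv - gh*gv) / (bh*bv + bh*gv)"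

definition sh_e :: "real \<Rightarrow> real \<Rightarrow> real \<Rightarrow> real \<Rightarrow> real \<Rightarrow> real" where
  "sh_e C0 bh gh bv gv = 1 - ih_e C0 bh gh bv gv"

definition sv_e :: "real \<Rightarrow> real \<Rightarrow> real \<Rightarrow> real \<Rightarrow> real \<Rightarrow> real" where
  "sv_e C0 bh gh bv gv = C0 - iv_e C0 bh gh bv gv"

definition R0 :: "real \<Rightarrow> real \<Rightarrow> real \<Rightarrow> real \<Rightarrow> real \<Rightarrow> real" where
  "R0 C0 bh gh bv gv = sqrt ((bh / gv) * (C0 * bv / gh))"

definition C_e :: "real \<Rightarrow> real \<Rightarrow> real \<Rightarrow> real \<Rightarrow> real \<Rightarrow> real^3^3" where
  "C_e C0 bh gh bv gv =
     (let ih = ih_e C0 bh gh bv gv; iv = iv_e C0 bh gh bv gv;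
          sh = sh_e C0 bh gh bv gv; sv = sv_e C0 bh gh bv gv in
      vector [vector [-(gh + bh*iv), 0, bh * sh],
              vector [-(bv * sv), -(bv*ih), gv],
              vector [bv * sv, bv*ih, -gv]])"

definition sigma_e :: "real \<Rightarrow> real \<Rightarrow> real \<Rightarrow> real \<Rightarrow> real \<Rightarrow> real^4^3" where
  "sigma_e C0 bh gh bv gv =
     (let ih = ih_e C0 bh gh bv gv; iv = iv_e C0 bh gh bv gv;
          sh = sh_e C0 bh gh bv gv; sv = sv_e C0 bh gh bv gv in
      vector [vector [sqrt (bh*iv * sh + gh*ih), 0, 0, 0],
              vector [0, sqrt (gv*(C0 + sv)), - sqrt (bv*ih * sv), 0],
              vector [0, 0, sqrt (bv*ih * sv), sqrt (gv*iv)]])"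

definition std_BM1 :: "'a measure \<Rightarrow> (real \<Rightarrow> 'a \<Rightarrow> real) \<Rightarrow> bool" where
  "std_BM1 M W \<longleftrightarrow>
     prob_space M \<and>
     (\<forall>t\<ge>0. W t \<in> borel_measurable M) \<and>
     (\<forall>\<omega>\<in>space M. W 0 \<omega> = 0) \<and>
     (\<forall>\<omega>\<in>space M. continuous_on {0..} (\<lambda>t. W t \<omega>)) \<and>
     (\<forall>s t. 0 \<le> s \<and> s < t \<longrightarrow>
        distributed M lborel (\<lambda>\<omega>. W t \<omega> - W s \<omega>) (\<lambda>x. ennreal (normal_density 0 (sqrt (t - s)) x))) \<and>
     (\<forall>(u :: nat \<Rightarrow> real) n. 0 \<le> u 0 \<and> strict_mono u \<longrightarrow>
        prob_space.indep_vars M (\<lambda>_. borel) (\<lambda>i \<omega>. W (u (Suc i)) \<omega> - W (u i) \<omega>) {..<n})"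

definition std_BM :: "'a measure \<Rightarrow> (real \<Rightarrow> 'a \<Rightarrow> real^'d) \<Rightarrow> bool" where
  "std_BM M B \<longleftrightarrow>
     (\<forall>k. std_BM1 M (\<lambda>t \<omega>. B t \<omega> $ k)) \<and>
     prob_space.indep_vars M (\<lambda>_. PiM {0..} (\<lambda>_. (borel :: real measure)))
        (\<lambda>k \<omega>. restrict (\<lambda>t. B t \<omega> $ k) {0..}) UNIV"

end

theory Submission
  imports Defs
begin

lemma BM1_incr:
  assumes W: "std_BM1 M W" and st: "0 \<le> s" "s \<le> t"
  shows "integrable M (\<lambda>\<omega>. (W t \<omega> - W s \<omega>)\<^sup>2)"
    "prob_space.expectation M (\<lambda>\<omega>. (W t \<omega> - W s \<omega>)\<^sup>2) = t - s"
    "integrable M (\<lambda>\<omega>. W t \<omega> - W s \<omega>)"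
    "prob_space.expectation M (\<lambda>\<omega>. W t \<omega> - W s \<omega>) = 0"
proof -
  interpret prob_space M using W by (simp add: std_BM1_def)
  have meas: "W t \<in> borel_measurable M" "W s \<in> borel_measurable M" using W st by (auto simp: std_BM1_def)
  have "integrable M (\<lambda>\<omega>. (W t \<omega> - W s \<omega>)\<^sup>2) \<and> expectation (\<lambda>\<omega>. (W t \<omega> - W s \<omega>)\<^sup>2) = t - s
     \<and> integrable M (\<lambda>\<omega>. W t \<omega> - W s \<omega>) \<and> expectation (\<lambda>\<omega>. W t \<omega> - W s \<omega>) = 0"
  proof (cases "s = t")
    case True then show ?thesis by simp
  next
    case False
    then have lt: "s < t" using st by simp
    have D: "distributed M lborel (\<lambda>\<omega>. W t \<omega> - W s \<omega>) (\<lambda>x. ennreal (normal_density 0 (sqrt (t - s)) x))"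
      using W st lt by (simp add: std_BM1_def)
    have sp: "0 < sqrt (t - s)" using lt by simp
    have i1: "integrable M (\<lambda>\<omega>. (W t \<omega> - W s \<omega>)\<^sup>2)"
    proof -
      have "integrable lborel (\<lambda>x. normal_density 0 (sqrt (t-s)) x * x\<^sup>2)"
        using integrable_normal_moment[where \<mu>=0 and \<sigma>="sqrt (t-s)" and k=2, OF sp] by (simp only: diff_zero)
      then show ?thesis using distributed_integrable[OF D, of "\<lambda>x. x\<^sup>2"] by simp
    qed
    have e1: "expectation (\<lambda>\<omega>. (W t \<omega> - W s \<omega>)\<^sup>2) = t - s"
      using distributed_integral[OF D, of "\<lambda>x. x\<^sup>2"] integral_normal_moment_even[where \<mu>=0 and \<sigma>="sqrt (t-s)" and k=1, OF sp] lt
      by (simp add: eval_nat_numeral)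
    have i2: "integrable M (\<lambda>\<omega>. W t \<omega> - W s \<omega>)"
    proof -
      have "integrable lborel (\<lambda>x. normal_density 0 (sqrt (t-s)) x * x)"
        using integrable_normal_moment[where \<mu>=0 and \<sigma>="sqrt (t-s)" and k=1, OF sp] by (simp only: diff_zero power_one_right)
      then show ?thesis using distributed_integrable[OF D, of "\<lambda>x. x"] by simp
    qed
    have e2: "expectation (\<lambda>\<omega>. W t \<omega> - W s \<omega>) = 0"
      using normal_distributed_expectation[OF sp D] by simp
    show ?thesis using i1 e1 i2 e2 by simp
  qed
  then show "integrable M (\<lambda>\<omega>. (W t \<omega> - W s \<omega>)\<^sup>2)"
    "expectation (\<lambda>\<omega>. (W t \<omega> - W s \<omega>)\<^sup>2) = t - s"
    "integrable M (\<lambda>\<omega>. W t \<omega> - W s \<omega>)"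
    "expectation (\<lambda>\<omega>. W t \<omega> - W s \<omega>) = 0" by auto
qed

lemma floor_approx_tendsto:
  fixes s :: real
  shows "(\<lambda>n. real_of_int \<lfloor>(real n + 1) * s\<rfloor> / (real n + 1)) \<longlonglongrightarrow> s"
proof (rule tendsto_sandwich[where f="\<lambda>n. s - 1 / (real n + 1)" and h="\<lambda>n. s"])
  show "\<forall>\<^sub>F n in sequentially. s - 1 / (real n + 1) \<le> real_of_int \<lfloor>(real n + 1) * s\<rfloor> / (real n + 1)"
  proof (intro always_eventually allI)
    fix n :: nat
    have p: "real n + 1 > 0" by simp
    have "(real n + 1) * s - 1 \<le> real_of_int \<lfloor>(real n + 1) * s\<rfloor>"
      by linarith
    then have "((real n + 1) * s - 1) / (real n + 1) \<le> real_of_int \<lfloor>(real n + 1) * s\<rfloor> / (real n + 1)"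
      by (rule divide_right_mono) simp
    moreover have "((real n + 1) * s - 1) / (real n + 1) = s - 1 / (real n + 1)"
      using p by (simp add: field_simps)
    ultimately show "s - 1 / (real n + 1) \<le> real_of_int \<lfloor>(real n + 1) * s\<rfloor> / (real n + 1)"
      by simp
  qed
  show "\<forall>\<^sub>F n in sequentially. real_of_int \<lfloor>(real n + 1) * s\<rfloor> / (real n + 1) \<le> s"
  proof (intro always_eventually allI)
    fix n :: nat
    have p: "real n + 1 > 0" by simp
    have "real_of_int \<lfloor>(real n + 1) * s\<rfloor> \<le> (real n + 1) * s"
      by linarith
    then have "real_of_int \<lfloor>(real n + 1) * s\<rfloor> / (real n + 1) \<le> (real n + 1) * s / (real n + 1)"
      by (rule divide_right_mono) simp
    then show "real_of_int \<lfloor>(real n + 1) * s\<rfloor> / (real n + 1) \<le> s"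
      using p by simp
  qed
  show "(\<lambda>n. s) \<longlonglongrightarrow> s" by simp
  have "(\<lambda>n. 1 / (real n + 1)) \<longlonglongrightarrow> 0"
    using LIMSEQ_inverse_real_of_nat by (simp add: inverse_eq_divide add.commute)
  then show "(\<lambda>n. s - 1 / (real n + 1)) \<longlonglongrightarrow> s"
    using tendsto_diff[of "\<lambda>n. s" s sequentially "\<lambda>n. 1 / (real n + 1)" 0] by simp
qed

lemma joint_meas:
  fixes W :: "real \<Rightarrow> 'a \<Rightarrow> real"
  assumes meas: "\<And>t. t \<ge> 0 \<Longrightarrow> W t \<in> borel_measurable M"
    and cont: "\<And>\<omega>. \<omega> \<in> space M \<Longrightarrow> continuous_on {0..} (\<lambda>t. W t \<omega>)"
  shows "(\<lambda>p::'a \<times> real. W (max 0 (snd p)) (fst p)) \<in> borel_measurable (M \<Otimes>\<^sub>M lborel)"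
proof (rule borel_measurable_LIMSEQ_real)
  let ?u = "\<lambda>n (p::'a \<times> real). W (max 0 (real_of_int \<lfloor>(real n + 1) * snd p\<rfloor> / (real n + 1))) (fst p)"
  show "\<And>n. ?u n \<in> borel_measurable (M \<Otimes>\<^sub>M lborel)"
  proof -
    fix n :: nat
    have f: "(\<lambda>p::'a \<times> real. W (max 0 (real_of_int i / (real n + 1))) (fst p)) \<in> borel_measurable (M \<Otimes>\<^sub>M lborel)" for i :: int
      using meas[of "max 0 (real_of_int i / (real n + 1))"] by (intro measurable_compose[OF measurable_fst]) auto
    have g: "(\<lambda>p::'a \<times> real. \<lfloor>(real n + 1) * snd p\<rfloor>) \<in> measurable (M \<Otimes>\<^sub>M lborel) (count_space UNIV)"
      by measurable
    show "?u n \<in> borel_measurable (M \<Otimes>\<^sub>M lborel)"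
      using measurable_compose_countable'[where I=UNIV and f="\<lambda>i p. W (max 0 (real_of_int i / (real n + 1))) (fst p)", OF f g]
      by simp
  qed
  show "\<And>p. p \<in> space (M \<Otimes>\<^sub>M lborel) \<Longrightarrow> (\<lambda>n. ?u n p) \<longlonglongrightarrow> W (max 0 (snd p)) (fst p)"
  proof -
    fix p :: "'a \<times> real" assume p: "p \<in> space (M \<Otimes>\<^sub>M lborel)"
    then have "fst p \<in> space M" by (auto simp: space_pair_measure)
    then have c: "continuous_on {0..} (\<lambda>t. W t (fst p))" by (rule cont)
    have "(\<lambda>n. max 0 (real_of_int \<lfloor>(real n + 1) * snd p\<rfloor> / (real n + 1))) \<longlonglongrightarrow> max 0 (snd p)"
      by (intro tendsto_max tendsto_const floor_approx_tendsto)
    then show "(\<lambda>n. ?u n p) \<longlonglongrightarrow> W (max 0 (snd p)) (fst p)"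
      by (rule continuous_on_tendsto_compose[OF c]) auto
  qed
qed

lemma exp_integral_ftc:
  fixes l t :: real
  assumes "t \<ge> 0"
  shows "((\<lambda>s. l * exp (l * (t - s))) has_integral (exp (l * t) - 1)) {0..t}"
proof -
  have "((\<lambda>s. l * exp (l * (t - s))) has_integral ((- exp (l * (t - t))) - (- exp (l * (t - 0))))) {0..t}"
  proof (rule fundamental_theorem_of_calculus[OF assms])
    fix s assume "s \<in> {0..t}"
    show "((\<lambda>s. - exp (l * (t - s))) has_vector_derivative l * exp (l * (t - s))) (at s within {0..t})"
      unfolding has_real_derivative_iff_has_vector_derivative[symmetric]
      by (auto intro!: derivative_eq_intros)
  qed
  then show ?thesis by simp
qed

lemma exp_shift_aux:
  fixes l t s :: real and b :: "real \<Rightarrow> real"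
  shows "exp (l*(t-s)) * (b s - b t) = exp (l*t) * (exp (- l * s) * b s) - b t * exp (l*(t-s))"
proof -
  have "exp (l*t) * exp (- l * s) = exp (l*(t-s))"
    by (simp add: mult_exp_exp[symmetric] right_diff_distrib exp_diff exp_minus divide_inverse)
  then show ?thesis by (simp add: algebra_simps)
qed

lemma ode_scalar:
  fixes x b :: "real \<Rightarrow> real" and l t :: real
  assumes cx: "continuous_on {0..} x" and cb: "continuous_on {0..} b"
    and eq: "\<And>u. u \<ge> 0 \<Longrightarrow> x u = x 0 + l * integral {0..u} x + b u"
    and t: "t \<ge> 0"
  shows "x t = exp (l*t) * (x 0 + b t) + l * integral {0..t} (\<lambda>s. exp (l*(t-s)) * (b s - b t))"
proof -
  define I where "I u = integral {0..u} x" for u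
  define J where "J u = integral {0..u} (\<lambda>s. exp (- l * s) * b s)" for u
  define g where "g u = exp (- l * u) * (x 0 + l * I u) - l * J u" for u
  have cxt: "continuous_on {0..t} x" using cx by (rule continuous_on_subset) auto
  have cbt: "continuous_on {0..t} b" using cb by (rule continuous_on_subset) auto
  have cjt: "continuous_on {0..t} (\<lambda>s. exp (- l * s) * b s)"
    by (intro continuous_intros cbt)
  have "\<exists>c. \<forall>u\<in>{0..t}. g u = c"
  proof (rule has_field_derivative_zero_constant)
    show "convex {0..t}" by simp
    fix u assume u: "u \<in> {0..t}"
    have dI: "(I has_field_derivative x u) (at u within {0..t})"
      unfolding I_def has_real_derivative_iff_has_vector_derivative
      by (rule integral_has_vector_derivative[OF cxt u])
    have dJ: "(J has_field_derivative (exp (- l * u) * b u)) (at u within {0..t})"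
      unfolding J_def has_real_derivative_iff_has_vector_derivative
      by (rule integral_has_vector_derivative[OF cjt u])
    have "(g has_field_derivative
        (- l * exp (- l * u) * (x 0 + l * I u) + exp (- l * u) * (l * x u) - l * (exp (- l * u) * b u))) (at u within {0..t})"
      unfolding g_def[abs_def]
      by (rule derivative_eq_intros dI dJ refl | simp)+
    moreover have "x u = x 0 + l * I u + b u" using eq[of u] u by (simp add: I_def)
    ultimately show "(g has_field_derivative 0) (at u within {0..t})"
      by (simp add: algebra_simps)
  qed
  then obtain c where c: "\<And>u. u \<in> {0..t} \<Longrightarrow> g u = c" by blast
  have "g t = g 0" using c[of t] c[of 0] t by simp
  also have "g 0 = x 0" by (simp add: g_def I_def J_def)
  finally have gt: "g t = x 0" .
  have xt: "x t = x 0 + l * I t + b t" using eq[OF t] by (simp add: I_def)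
  have key: "x t = exp (l*t) * x 0 + b t + l * exp (l*t) * J t"
  proof -
    have "exp (- l * t) * (x 0 + l * I t) = x 0 + l * J t" using gt by (simp add: g_def)
    then have "x 0 + l * I t = exp (l*t) * (x 0 + l * J t)"
    proof -
      have "x 0 + l * I t = (exp (l*t) * exp (- l * t)) * (x 0 + l * I t)"
        by (simp add: mult_exp_exp)
      also have "\<dots> = exp (l*t) * (exp (- l * t) * (x 0 + l * I t))" by (simp only: mult.assoc)
      finally show ?thesis by (simp only: \<open>exp (- l * t) * (x 0 + l * I t) = x 0 + l * J t\<close>)
    qed
    then show ?thesis using xt by (simp add: algebra_simps)
  qed
  have int1: "(\<lambda>s. exp (- l * s) * b s) integrable_on {0..t}"
    using cjt by (rule integrable_continuous_interval)
  have int2: "(\<lambda>s. exp (l*(t-s))) integrable_on {0..t}"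
    by (intro integrable_continuous_interval continuous_intros)
  have "integral {0..t} (\<lambda>s. exp (l*(t-s)) * (b s - b t))
      = integral {0..t} (\<lambda>s. exp (l*t) * (exp (- l * s) * b s) - b t * exp (l*(t-s)))"
    by (rule integral_cong) (rule exp_shift_aux)
  also have "\<dots> = exp (l*t) * J t - b t * integral {0..t} (\<lambda>s. exp (l*(t-s)))"
  proof -
    have "integral {0..t} (\<lambda>s. exp (l*t) * (exp (- l * s) * b s) - b t * exp (l*(t-s)))
       = integral {0..t} (\<lambda>s. exp (l*t) * (exp (- l * s) * b s)) - integral {0..t} (\<lambda>s. b t * exp (l*(t-s)))"
      by (rule integral_diff[OF integrable_on_mult_right[OF int1] integrable_on_mult_right[OF int2]])
    then show ?thesis by (simp add: J_def)
  qed
  finally have e1: "integral {0..t} (\<lambda>s. exp (l*(t-s)) * (b s - b t)) = exp (l*t) * J t - b t * integral {0..t} (\<lambda>s. exp (l*(t-s)))" .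
  have e2: "l * integral {0..t} (\<lambda>s. exp (l*(t-s))) = exp (l*t) - 1"
    using integral_unique[OF exp_integral_ftc[OF t, of l]] by simp
  have h: "l * integral {0..t} (\<lambda>s. exp (l*(t-s)) * (b s - b t)) = l * exp (l*t) * J t - b t * (l * integral {0..t} (\<lambda>s. exp (l*(t-s))))"
    unfolding e1 by (simp only: right_diff_distrib mult.assoc mult.left_commute)
  have h2: "l * integral {0..t} (\<lambda>s. exp (l*(t-s)) * (b s - b t)) = l * exp (l*t) * J t - b t * (exp (l*t) - 1)"
    using h e2 by simp
  show ?thesis unfolding h2 key by (simp add: algebra_simps)
qed

lemma quad_discr:
  fixes A B W :: real
  assumes "\<And>c. 0 \<le> B - 2 * c * A + c\<^sup>2 * W" and W: "W \<ge> 0"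
  shows "A\<^sup>2 \<le> W * B"
proof (cases "W > 0")
  case True
  have "0 \<le> B - 2 * (A / W) * A + (A / W)\<^sup>2 * W" by (rule assms)
  also have "\<dots> = B - A\<^sup>2 / W" using True by (simp add: power2_eq_square field_simps)
  finally show ?thesis using True by (simp add: field_simps)
next
  case False
  have W0: "W = 0" using False W by simp
  show ?thesis
  proof (cases "A = 0")
    case True
    then show ?thesis using W0 by simp
  next
    case False
    have "0 \<le> B - 2 * ((B + 1) / (2 * A)) * A + ((B + 1) / (2 * A))\<^sup>2 * W" by (rule assms)
    also have "\<dots> = -1" using False W0 by (simp add: field_simps)
    finally show ?thesis by simp
  qed
qed

lemma weighted_CS:
  fixes w g :: "real \<Rightarrow> real" and a b :: real
  assumes cw: "continuous_on {a..b} w" and cg: "continuous_on {a..b} g"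
    and wpos: "\<And>s. s \<in> {a..b} \<Longrightarrow> 0 \<le> w s"
  shows "(integral {a..b} (\<lambda>s. w s * g s))\<^sup>2 \<le> integral {a..b} w * integral {a..b} (\<lambda>s. w s * (g s)\<^sup>2)"
proof (rule quad_discr)
  show "integral {a..b} w \<ge> 0"
    by (rule integral_nonneg) (auto intro!: integrable_continuous_interval cw wpos)
next
  fix c :: real
  have i1: "(\<lambda>s. w s * (g s)\<^sup>2) integrable_on {a..b}"
    by (intro integrable_continuous_interval continuous_intros cw cg)
  have i2: "(\<lambda>s. w s * g s) integrable_on {a..b}"
    by (intro integrable_continuous_interval continuous_intros cw cg)
  have i3: "w integrable_on {a..b}" by (intro integrable_continuous_interval cw)
  have "0 \<le> integral {a..b} (\<lambda>s. w s * (g s - c)\<^sup>2)"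
    by (rule integral_nonneg) (auto intro!: integrable_continuous_interval continuous_intros cw cg wpos mult_nonneg_nonneg)
  also have "integral {a..b} (\<lambda>s. w s * (g s - c)\<^sup>2)
      = integral {a..b} (\<lambda>s. w s * (g s)\<^sup>2 - (2 * c) * (w s * g s) + c\<^sup>2 * w s)"
    by (rule integral_cong) (simp add: power2_eq_square algebra_simps)
  also have "\<dots> = integral {a..b} (\<lambda>s. w s * (g s)\<^sup>2) - (2 * c) * integral {a..b} (\<lambda>s. w s * g s) + c\<^sup>2 * integral {a..b} w"
    using i1 i2 i3
    by (simp add: integral_add integral_diff integrable_on_mult_right integrable_diff)
  finally show "0 \<le> integral {a..b} (\<lambda>s. w s * (g s)\<^sup>2) - 2 * c * integral {a..b} (\<lambda>s. w s * g s) + c\<^sup>2 * integral {a..b} w" .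
qed

lemma exp_int_bound:
  fixes l t :: real
  assumes l: "l < 0" and t: "t \<ge> 0"
  shows "integral {0..t} (\<lambda>s. exp (l * (t - s))) \<le> 1 / (- l)"
proof -
  have e: "l * integral {0..t} (\<lambda>s. exp (l*(t-s))) = exp (l*t) - 1"
    using integral_unique[OF exp_integral_ftc[OF t, of l]] by simp
  have "exp (l*t) > 0" by simp
  then have "l * integral {0..t} (\<lambda>s. exp (l*(t-s))) \<ge> -1" using e by simp
  then show ?thesis using l by (simp add: field_simps)
qed

lemma exp_lin_int:
  fixes l t :: real
  assumes l: "l < 0" and t: "t \<ge> 0"
  shows "((\<lambda>s. exp (l * (t - s)) * (t - s)) has_integral
     (1 / l\<^sup>2 - exp (l * t) * (- t / l + 1 / l\<^sup>2))) {0..t}"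
proof -
  define G where "G s = exp (l * (t - s)) * (- (t - s) / l + 1 / l\<^sup>2)" for s
  have "((\<lambda>s. exp (l * (t - s)) * (t - s)) has_integral (G t - G 0)) {0..t}"
  proof (rule fundamental_theorem_of_calculus[OF t])
    fix s assume "s \<in> {0..t}"
    have "(G has_field_derivative exp (l * (t - s)) * (t - s)) (at s within {0..t})"
      unfolding G_def using l
      by (auto intro!: derivative_eq_intros simp: power2_eq_square field_simps)
    then show "(G has_vector_derivative exp (l * (t - s)) * (t - s)) (at s within {0..t})"
      by (simp add: has_real_derivative_iff_has_vector_derivative)
  qed
  moreover have "G t - G 0 = 1 / l\<^sup>2 - exp (l * t) * (- t / l + 1 / l\<^sup>2)" by (simp add: G_def)
  ultimately show ?thesis by simp
qed

lemma exp_lin_int_bound: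
  fixes l t :: real
  assumes l: "l < 0" and t: "t \<ge> 0"
  shows "integral {0..t} (\<lambda>s. exp (l * (t - s)) * (t - s)) \<le> 1 / l\<^sup>2"
proof -
  have "- t / l \<ge> 0" using l t by (simp add: divide_nonneg_neg)
  moreover have "1 / l\<^sup>2 \<ge> 0" by simp
  ultimately have "- t / l + 1 / l\<^sup>2 \<ge> 0" by linarith
  then have "exp (l * t) * (- t / l + 1 / l\<^sup>2) \<ge> 0" by simp
  then show ?thesis using integral_unique[OF exp_lin_int[OF l t]] by simp
qed

lemma lint_interval:
  fixes f :: "real \<Rightarrow> real"
  assumes c: "continuous_on {a..b} f"
  shows "integrable lborel (\<lambda>s. indicator {a..b} s * f s)"
    "(\<integral>s. indicator {a..b} s * f s \<partial>lborel) = integral {a..b} f"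
proof -
  have i: "integrable lborel (\<lambda>s. indicator {a..b} s *\<^sub>R f s)"
    by (rule borel_integrable_compact[OF compact_Icc c])
  then show "integrable lborel (\<lambda>s. indicator {a..b} s * f s)" by simp
  have "set_integrable lborel {a..b} f" using i by (simp add: set_integrable_def)
  from set_borel_integral_eq_integral(2)[OF this]
  show "(\<integral>s. indicator {a..b} s * f s \<partial>lborel) = integral {a..b} f"
    by (simp add: set_lebesgue_integral_def)
qed

lemma nn_interval:
  fixes f :: "real \<Rightarrow> real"
  assumes c: "continuous_on {a..b} f" and nn: "\<And>s. s \<in> {a..b} \<Longrightarrow> 0 \<le> f s"
  shows "(\<integral>\<^sup>+s. ennreal (indicator {a..b} s * f s) \<partial>lborel) = ennreal (integral {a..b} f)"
proof -
  have "(\<integral>\<^sup>+s. ennreal (indicator {a..b} s * f s) \<partial>lborel) = ennreal (\<integral>s. indicator {a..b} s * f s \<partial>lborel)"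
    by (rule nn_integral_eq_integral[OF lint_interval(1)[OF c]]) (auto simp: indicator_def nn)
  then show ?thesis using lint_interval(2)[OF c] by simp
qed

lemma J_bound:
  fixes M :: "'a measure" and bb :: "real \<Rightarrow> 'a \<Rightarrow> real" and l c t :: real
  assumes P: "prob_space M"
    and l: "l < 0" and c: "c \<ge> 0" and t: "t \<ge> 0"
    and bmeas: "\<And>t. t \<ge> 0 \<Longrightarrow> bb t \<in> borel_measurable M"
    and bcont: "\<And>\<omega>. \<omega> \<in> space M \<Longrightarrow> continuous_on {0..} (\<lambda>t. bb t \<omega>)"
    and binc: "\<And>s t. 0 \<le> s \<Longrightarrow> s \<le> t \<Longrightarrow> integrable M (\<lambda>\<omega>. (bb t \<omega> - bb s \<omega>)\<^sup>2) \<and>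
                   prob_space.expectation M (\<lambda>\<omega>. (bb t \<omega> - bb s \<omega>)\<^sup>2) \<le> c * (t - s)"
  shows "(\<lambda>\<omega>. integral {0..t} (\<lambda>s. exp (l*(t-s)) * (bb s \<omega> - bb t \<omega>))) \<in> borel_measurable M"
    "integrable M (\<lambda>\<omega>. (integral {0..t} (\<lambda>s. exp (l*(t-s)) * (bb s \<omega> - bb t \<omega>)))\<^sup>2)"
    "prob_space.expectation M (\<lambda>\<omega>. (integral {0..t} (\<lambda>s. exp (l*(t-s)) * (bb s \<omega> - bb t \<omega>)))\<^sup>2) \<le> c / (- l)^3"
proof -
  interpret prob_space M by (rule P)
  interpret pair_sigma_finite M lborel
    by (intro pair_sigma_finite.intro sigma_finite_measure_axioms lborel.sigma_finite_measure_axioms)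
  define J where "J \<omega> = integral {0..t} (\<lambda>s. exp (l*(t-s)) * (bb s \<omega> - bb t \<omega>))" for \<omega>
  define G where "G \<omega> = integral {0..t} (\<lambda>s. exp (l*(t-s)) * (bb s \<omega> - bb t \<omega>)\<^sup>2)" for \<omega>
  have jm[measurable]: "(\<lambda>p::'a \<times> real. bb (max 0 (snd p)) (fst p)) \<in> borel_measurable (M \<Otimes>\<^sub>M lborel)"
    by (rule joint_meas) (auto intro: bmeas bcont)
  have btm[measurable]: "bb t \<in> borel_measurable M" using bmeas t by simp
  have cont_t: "continuous_on {0..t} (\<lambda>s. bb s \<omega>)" if "\<omega> \<in> space M" for \<omega>
    using bcont[OF that] by (rule continuous_on_subset) auto
  have cont_max: "continuous_on {0..t} (\<lambda>s. bb (max 0 s) \<omega>)" if "\<omega> \<in> space M" for \<omega>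
    using cont_t[OF that] by (rule continuous_on_eq) auto
  have Jeq: "J \<omega> = (\<integral>s. indicator {0..t} s * (exp (l*(t-s)) * (bb (max 0 s) \<omega> - bb t \<omega>)) \<partial>lborel)"
    if "\<omega> \<in> space M" for \<omega>
  proof -
    have "J \<omega> = integral {0..t} (\<lambda>s. exp (l*(t-s)) * (bb (max 0 s) \<omega> - bb t \<omega>))"
      unfolding J_def by (rule integral_cong) auto
    also have "\<dots> = (\<integral>s. indicator {0..t} s * (exp (l*(t-s)) * (bb (max 0 s) \<omega> - bb t \<omega>)) \<partial>lborel)"
      by (rule lint_interval(2)[symmetric]) (intro continuous_intros cont_max that)
    finally show ?thesis .
  qed
  have "(\<lambda>\<omega>. \<integral>s. indicator {0..t} s * (exp (l*(t-s)) * (bb (max 0 s) \<omega> - bb t \<omega>)) \<partial>lborel) \<in> borel_measurable M"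
  proof (rule lborel.borel_measurable_lebesgue_integral)
    show "(\<lambda>(\<omega>, s). indicator {0..t} s * (exp (l*(t-s)) * (bb (max 0 s) \<omega> - bb t \<omega>))) \<in> borel_measurable (M \<Otimes>\<^sub>M lborel)"
      unfolding case_prod_beta by measurable
  qed
  then have Jm[measurable]: "J \<in> borel_measurable M"
    by (rule measurable_cong[THEN iffD2, rotated]) (simp add: Jeq)
  then show "(\<lambda>\<omega>. integral {0..t} (\<lambda>s. exp (l*(t-s)) * (bb s \<omega> - bb t \<omega>))) \<in> borel_measurable M"
    by (simp add: J_def[abs_def])
  have Gnn: "0 \<le> G \<omega>" if "\<omega> \<in> space M" for \<omega>
    unfolding G_def by (rule integral_nonneg) (auto intro!: integrable_continuous_interval continuous_intros cont_t that)
  have pw: "(J \<omega>)\<^sup>2 \<le> G \<omega> / (- l)" if w: "\<omega> \<in> space M" for \<omega>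
  proof -
    have "(J \<omega>)\<^sup>2 \<le> integral {0..t} (\<lambda>s. exp (l*(t-s))) * G \<omega>"
      unfolding J_def G_def
      by (rule weighted_CS[where w="\<lambda>s. exp (l*(t-s))" and g="\<lambda>s. bb s \<omega> - bb t \<omega>"])
         (auto intro!: continuous_intros cont_t w)
    also have "\<dots> \<le> (1 / (- l)) * G \<omega>"
      by (rule mult_right_mono[OF exp_int_bound[OF l t] Gnn[OF w]])
    finally show ?thesis by simp
  qed
  define H where "H \<omega> s = indicator {0..t} s * (exp (l*(t-s)) * (bb (max 0 s) \<omega> - bb t \<omega>)\<^sup>2)" for \<omega> s
  have Hm: "(\<lambda>(\<omega>, s). ennreal (H \<omega> s)) \<in> borel_measurable (M \<Otimes>\<^sub>M lborel)"
    unfolding case_prod_beta H_def by measurable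
  have GH: "ennreal (G \<omega>) = (\<integral>\<^sup>+s. ennreal (H \<omega> s) \<partial>lborel)" if w: "\<omega> \<in> space M" for \<omega>
  proof -
    have "G \<omega> = integral {0..t} (\<lambda>s. exp (l*(t-s)) * (bb (max 0 s) \<omega> - bb t \<omega>)\<^sup>2)"
      unfolding G_def by (rule integral_cong) auto
    moreover have "(\<integral>\<^sup>+s. ennreal (H \<omega> s) \<partial>lborel) = ennreal (integral {0..t} (\<lambda>s. exp (l*(t-s)) * (bb (max 0 s) \<omega> - bb t \<omega>)\<^sup>2))"
      unfolding H_def by (rule nn_interval) (auto intro!: continuous_intros cont_max w)
    ultimately show ?thesis by simp
  qed
  have inner: "(\<integral>\<^sup>+\<omega>. ennreal (H \<omega> s) \<partial>M) \<le> ennreal (indicator {0..t} s * (exp (l*(t-s)) * (c * (t - s))))" for s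
  proof (cases "s \<in> {0..t}")
    case False
    then show ?thesis by (simp add: H_def)
  next
    case True
    then have s0: "0 \<le> s" "s \<le> t" by auto
    have bsm[measurable]: "bb s \<in> borel_measurable M" using bmeas s0 by simp
    have "(\<integral>\<^sup>+\<omega>. ennreal (H \<omega> s) \<partial>M) = (\<integral>\<^sup>+\<omega>. ennreal (exp (l*(t-s))) * ennreal ((bb t \<omega> - bb s \<omega>)\<^sup>2) \<partial>M)"
      using True by (intro nn_integral_cong) (simp add: H_def ennreal_mult[symmetric] power2_commute max_def)
    also have "\<dots> = ennreal (exp (l*(t-s))) * (\<integral>\<^sup>+\<omega>. ennreal ((bb t \<omega> - bb s \<omega>)\<^sup>2) \<partial>M)"
      by (rule nn_integral_cmult) measurable
    also have "(\<integral>\<^sup>+\<omega>. ennreal ((bb t \<omega> - bb s \<omega>)\<^sup>2) \<partial>M) = ennreal (expectation (\<lambda>\<omega>. (bb t \<omega> - bb s \<omega>)\<^sup>2))"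
      using binc[OF s0] by (intro nn_integral_eq_integral) auto
    also have "ennreal (exp (l*(t-s))) * ennreal (expectation (\<lambda>\<omega>. (bb t \<omega> - bb s \<omega>)\<^sup>2))
        \<le> ennreal (exp (l*(t-s))) * ennreal (c * (t - s))"
      using binc[OF s0] by (intro mult_left_mono ennreal_leI) auto
    also have "\<dots> = ennreal (indicator {0..t} s * (exp (l*(t-s)) * (c * (t - s))))"
    proof -
      have "0 \<le> c * (t - s)" using c s0 by simp
      then show ?thesis using True by (simp add: ennreal_mult[symmetric])
    qed
    finally show ?thesis .
  qed
  have GGm: "(\<lambda>\<omega>. \<integral>\<^sup>+s. ennreal (H \<omega> s) \<partial>lborel) \<in> borel_measurable M"
    using Hm by (rule lborel.borel_measurable_nn_integral)
  have intc: "integral {0..t} (\<lambda>s. exp (l*(t-s)) * (c * (t - s))) \<le> c / l\<^sup>2"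
  proof -
    have "integral {0..t} (\<lambda>s. exp (l*(t-s)) * (c * (t - s))) = c * integral {0..t} (\<lambda>s. exp (l*(t-s)) * (t - s))"
      by (simp add: mult.left_commute)
    also have "\<dots> \<le> c * (1 / l\<^sup>2)"
      by (intro mult_left_mono exp_lin_int_bound l t c)
    finally show ?thesis by simp
  qed
  have "(\<integral>\<^sup>+\<omega>. (\<integral>\<^sup>+s. ennreal (H \<omega> s) \<partial>lborel) \<partial>M) = (\<integral>\<^sup>+s. (\<integral>\<^sup>+\<omega>. ennreal (H \<omega> s) \<partial>M) \<partial>lborel)"
    by (rule Fubini'[OF Hm, symmetric])
  also have "\<dots> \<le> (\<integral>\<^sup>+s. ennreal (indicator {0..t} s * (exp (l*(t-s)) * (c * (t - s)))) \<partial>lborel)"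
    by (rule nn_integral_mono) (rule inner)
  also have "\<dots> = ennreal (integral {0..t} (\<lambda>s. exp (l*(t-s)) * (c * (t - s))))"
    by (rule nn_interval) (auto intro!: continuous_intros mult_nonneg_nonneg c)
  also have "\<dots> \<le> ennreal (c / l\<^sup>2)"
    by (rule ennreal_leI[OF intc])
  finally have Gint: "(\<integral>\<^sup>+\<omega>. (\<integral>\<^sup>+s. ennreal (H \<omega> s) \<partial>lborel) \<partial>M) \<le> ennreal (c / l\<^sup>2)" .
  have "(\<integral>\<^sup>+\<omega>. ennreal ((J \<omega>)\<^sup>2) \<partial>M) \<le> (\<integral>\<^sup>+\<omega>. ennreal (1 / (- l)) * (\<integral>\<^sup>+s. ennreal (H \<omega> s) \<partial>lborel) \<partial>M)"
  proof (rule nn_integral_mono)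
    fix \<omega> assume w: "\<omega> \<in> space M"
    have "ennreal ((J \<omega>)\<^sup>2) \<le> ennreal ((1 / (- l)) * G \<omega>)"
      using pw[OF w] by (intro ennreal_leI) simp
    also have "\<dots> = ennreal (1 / (- l)) * ennreal (G \<omega>)"
      using l Gnn[OF w] by (intro ennreal_mult) auto
    finally show "ennreal ((J \<omega>)\<^sup>2) \<le> ennreal (1 / (- l)) * (\<integral>\<^sup>+s. ennreal (H \<omega> s) \<partial>lborel)"
      by (simp add: GH[OF w])
  qed
  also have "\<dots> = ennreal (1 / (- l)) * (\<integral>\<^sup>+\<omega>. (\<integral>\<^sup>+s. ennreal (H \<omega> s) \<partial>lborel) \<partial>M)"
    by (rule nn_integral_cmult[OF GGm])
  also have "\<dots> \<le> ennreal (1 / (- l)) * ennreal (c / l\<^sup>2)"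
    by (intro mult_left_mono Gint) auto
  also have "\<dots> = ennreal (c / (- l)^3)"
  proof -
    have "ennreal (1 / (- l)) * ennreal (c / l\<^sup>2) = ennreal (1 / (- l) * (c / l\<^sup>2))"
      using l c by (intro ennreal_mult[symmetric]) auto
    also have "1 / (- l) * (c / l\<^sup>2) = c / (- l)^3"
      using l by (simp add: power2_eq_square power3_eq_cube field_simps)
    finally show ?thesis .
  qed
  finally have Jint: "(\<integral>\<^sup>+\<omega>. ennreal ((J \<omega>)\<^sup>2) \<partial>M) \<le> ennreal (c / (- l)^3)" .
  have iJ: "integrable M (\<lambda>\<omega>. (J \<omega>)\<^sup>2)"
  proof (rule integrableI_nonneg)
    show "(\<integral>\<^sup>+\<omega>. ennreal ((J \<omega>)\<^sup>2) \<partial>M) < \<infinity>"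
      using Jint by (rule le_less_trans) simp
  qed auto
  then show "integrable M (\<lambda>\<omega>. (integral {0..t} (\<lambda>s. exp (l*(t-s)) * (bb s \<omega> - bb t \<omega>)))\<^sup>2)"
    by (simp add: J_def)
  have "ennreal (expectation (\<lambda>\<omega>. (J \<omega>)\<^sup>2)) \<le> ennreal (c / (- l)^3)"
    using Jint nn_integral_eq_integral[OF iJ] by simp
  then have "expectation (\<lambda>\<omega>. (J \<omega>)\<^sup>2) \<le> c / (- l)^3"
  proof -
    have "0 \<le> c / (- l)^3" using l c by (intro divide_nonneg_pos) auto
    then show "ennreal (expectation (\<lambda>\<omega>. (J \<omega>)\<^sup>2)) \<le> ennreal (c / (- l)^3) \<Longrightarrow> expectation (\<lambda>\<omega>. (J \<omega>)\<^sup>2) \<le> c / (- l)^3"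
      by (simp only: ennreal_le_iff)
  qed
  then show "expectation (\<lambda>\<omega>. (integral {0..t} (\<lambda>s. exp (l*(t-s)) * (bb s \<omega> - bb t \<omega>)))\<^sup>2) \<le> c / (- l)^3"
    by (simp add: J_def)
qed

lemma t_exp_bound:
  fixes l t :: real
  assumes l: "l < 0" and t: "t \<ge> 0"
  shows "t * exp (l * t) \<le> 1 / (- l)"
proof -
  have "- l * t \<le> exp (- l * t)" using exp_ge_add_one_self[of "- l * t"] by simp
  then have "(- l * t) * exp (l * t) \<le> exp (- l * t) * exp (l * t)"
    by (rule mult_right_mono) simp
  also have "exp (- l * t) * exp (l * t) = 1" by (simp add: mult_exp_exp)
  finally have "(- l) * (t * exp (l * t)) \<le> 1" by (simp add: mult.assoc)
  then show ?thesis using l by (simp add: field_simps mult.commute)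
qed

lemma sq3: "((a::real) + b + d)\<^sup>2 \<le> 3 * (a\<^sup>2 + b\<^sup>2 + d\<^sup>2)"
proof -
  have "3 * (a\<^sup>2 + b\<^sup>2 + d\<^sup>2) - (a + b + d)\<^sup>2 = (a - b)\<^sup>2 + (b - d)\<^sup>2 + (a - d)\<^sup>2"
    by (simp add: power2_eq_square algebra_simps)
  moreover have "0 \<le> (a - b)\<^sup>2 + (b - d)\<^sup>2 + (a - d)\<^sup>2" by simp
  ultimately show ?thesis by linarith
qed

lemma ou_bound:
  fixes M :: "'a measure" and x bb :: "real \<Rightarrow> 'a \<Rightarrow> real" and l c :: real
  assumes P: "prob_space M"
    and l: "l < 0" and c: "c \<ge> 0"
    and bmeas: "\<And>t. t \<ge> 0 \<Longrightarrow> bb t \<in> borel_measurable M"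
    and bcont: "\<And>\<omega>. \<omega> \<in> space M \<Longrightarrow> continuous_on {0..} (\<lambda>t. bb t \<omega>)"
    and binc: "\<And>s t. 0 \<le> s \<Longrightarrow> s \<le> t \<Longrightarrow> integrable M (\<lambda>\<omega>. (bb t \<omega> - bb s \<omega>)\<^sup>2) \<and>
                   prob_space.expectation M (\<lambda>\<omega>. (bb t \<omega> - bb s \<omega>)\<^sup>2) \<le> c * (t - s)"
    and x0m: "x 0 \<in> borel_measurable M" and x0i: "integrable M (\<lambda>\<omega>. (x 0 \<omega>)\<^sup>2)"
    and xcont: "\<And>\<omega>. \<omega> \<in> space M \<Longrightarrow> continuous_on {0..} (\<lambda>t. x t \<omega>)"
    and xeq: "\<And>\<omega> t. \<omega> \<in> space M \<Longrightarrow> t \<ge> 0 \<Longrightarrow> x t \<omega> = x 0 \<omega> + l * integral {0..t} (\<lambda>s. x s \<omega>) + bb t \<omega>"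
  shows "\<exists>K. \<forall>t\<ge>0. x t \<in> borel_measurable M \<and> integrable M (\<lambda>\<omega>. (x t \<omega>)\<^sup>2) \<and>
            prob_space.expectation M (\<lambda>\<omega>. (x t \<omega>)\<^sup>2) \<le> K"
proof -
  interpret prob_space M by (rule P)
  define K where "K = 3 * (expectation (\<lambda>\<omega>. (x 0 \<omega>)\<^sup>2) + 2 * (c / (- l)))"
  have b0: "bb 0 \<omega> = 0" if "\<omega> \<in> space M" for \<omega>
    using xeq[OF that, of 0] by simp
  have "x t \<in> borel_measurable M \<and> integrable M (\<lambda>\<omega>. (x t \<omega>)\<^sup>2) \<and> expectation (\<lambda>\<omega>. (x t \<omega>)\<^sup>2) \<le> K"
    if t: "t \<ge> 0" for t
  proof -
    define J where "J \<omega> = integral {0..t} (\<lambda>s. exp (l*(t-s)) * (bb s \<omega> - bb t \<omega>))" for \<omega>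
    note JB = J_bound[OF P l c t bmeas bcont binc, folded J_def]
    have Jm[measurable]: "J \<in> borel_measurable M" using JB(1) by simp
    have btm[measurable]: "bb t \<in> borel_measurable M" using bmeas t by simp
    have x0m'[measurable]: "x 0 \<in> borel_measurable M" by (rule x0m)
    have rep: "x t \<omega> = exp (l*t) * (x 0 \<omega> + bb t \<omega>) + l * J \<omega>" if w: "\<omega> \<in> space M" for \<omega>
      unfolding J_def
      by (rule ode_scalar[where x="\<lambda>u. x u \<omega>" and b="\<lambda>u. bb u \<omega>", OF xcont[OF w] bcont[OF w] xeq[OF w] t])
    have xtm: "x t \<in> borel_measurable M"
    proof -
      have "(\<lambda>\<omega>. exp (l*t) * (x 0 \<omega> + bb t \<omega>) + l * J \<omega>) \<in> borel_measurable M" by measurable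
      then show ?thesis by (rule measurable_cong[THEN iffD1, rotated]) (simp add: rep)
    qed
    have bi: "integrable M (\<lambda>\<omega>. (bb t \<omega>)\<^sup>2)" "expectation (\<lambda>\<omega>. (bb t \<omega>)\<^sup>2) \<le> c * t"
    proof -
      have eqf: "\<And>\<omega>. \<omega> \<in> space M \<Longrightarrow> (bb t \<omega> - bb 0 \<omega>)\<^sup>2 = (bb t \<omega>)\<^sup>2" by (simp add: b0)
      show "integrable M (\<lambda>\<omega>. (bb t \<omega>)\<^sup>2)"
      proof -
        have "integrable M (\<lambda>\<omega>. (bb t \<omega> - bb 0 \<omega>)\<^sup>2) = integrable M (\<lambda>\<omega>. (bb t \<omega>)\<^sup>2)"
          by (rule Bochner_Integration.integrable_cong) (auto simp: eqf)
        then show ?thesis using binc[OF order_refl t] by simp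
      qed
      have "expectation (\<lambda>\<omega>. (bb t \<omega>)\<^sup>2) = expectation (\<lambda>\<omega>. (bb t \<omega> - bb 0 \<omega>)\<^sup>2)"
        by (rule Bochner_Integration.integral_cong) (auto simp: eqf)
      then show "expectation (\<lambda>\<omega>. (bb t \<omega>)\<^sup>2) \<le> c * t"
        using binc[OF order_refl t] by simp
    qed
    define F where "F \<omega> = 3 * ((exp (l*t))\<^sup>2 * (x 0 \<omega>)\<^sup>2 + (exp (l*t))\<^sup>2 * (bb t \<omega>)\<^sup>2 + l\<^sup>2 * (J \<omega>)\<^sup>2)" for \<omega>
    have Fi: "integrable M F"
      unfolding F_def using x0i bi(1) JB(2) by simp
    have pw: "(x t \<omega>)\<^sup>2 \<le> F \<omega>" if w: "\<omega> \<in> space M" for \<omega>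
    proof -
      have "(x t \<omega>)\<^sup>2 = (exp (l*t) * x 0 \<omega> + exp (l*t) * bb t \<omega> + l * J \<omega>)\<^sup>2"
        by (simp add: rep[OF w] algebra_simps)
      also have "\<dots> \<le> F \<omega>" unfolding F_def
        using sq3[of "exp (l*t) * x 0 \<omega>" "exp (l*t) * bb t \<omega>" "l * J \<omega>"] by (simp only: power_mult_distrib)
      finally show ?thesis .
    qed
    have xi: "integrable M (\<lambda>\<omega>. (x t \<omega>)\<^sup>2)"
    proof (rule Bochner_Integration.integrable_bound[OF Fi])
      show "(\<lambda>\<omega>. (x t \<omega>)\<^sup>2) \<in> borel_measurable M" using xtm by measurable
      show "AE \<omega> in M. norm ((x t \<omega>)\<^sup>2) \<le> norm (F \<omega>)"
      proof (rule AE_I2)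
        fix \<omega> assume w: "\<omega> \<in> space M"
        have "(x t \<omega>)\<^sup>2 \<le> F \<omega>" by (rule pw[OF w])
        then show "norm ((x t \<omega>)\<^sup>2) \<le> norm (F \<omega>)" by simp
      qed
    qed
    have "expectation (\<lambda>\<omega>. (x t \<omega>)\<^sup>2) \<le> expectation F"
      by (rule integral_mono[OF xi Fi pw])
    also have "expectation F = 3 * ((exp (l*t))\<^sup>2 * expectation (\<lambda>\<omega>. (x 0 \<omega>)\<^sup>2)
        + (exp (l*t))\<^sup>2 * expectation (\<lambda>\<omega>. (bb t \<omega>)\<^sup>2) + l\<^sup>2 * expectation (\<lambda>\<omega>. (J \<omega>)\<^sup>2))"
      unfolding F_def using x0i bi(1) JB(2) by simp
    also have "\<dots> \<le> K"
    proof -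
      have lt0: "l * t \<le> 0" using l t by (simp add: mult_nonpos_nonneg)
      have e0: "exp (l*t) \<le> 1" using lt0 by simp
      have e2: "(exp (l*t))\<^sup>2 \<le> exp (l*t)"
        using mult_right_mono[OF e0, of "exp (l*t)"] by (simp add: power2_eq_square)
      have e1: "(exp (l*t))\<^sup>2 \<le> 1" using e0 e2 by linarith
      have E0: "0 \<le> expectation (\<lambda>\<omega>. (x 0 \<omega>)\<^sup>2)" by simp
      have "(exp (l*t))\<^sup>2 * expectation (\<lambda>\<omega>. (x 0 \<omega>)\<^sup>2) \<le> expectation (\<lambda>\<omega>. (x 0 \<omega>)\<^sup>2)"
        using mult_right_mono[OF e1 E0] by simp
      moreover have "(exp (l*t))\<^sup>2 * expectation (\<lambda>\<omega>. (bb t \<omega>)\<^sup>2) \<le> c / (- l)"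
      proof -
        have "(exp (l*t))\<^sup>2 * expectation (\<lambda>\<omega>. (bb t \<omega>)\<^sup>2) \<le> exp (l*t) * (c * t)"
          using bi(2) e2 by (intro mult_mono) auto
        also have "\<dots> = c * (t * exp (l*t))" by simp
        also have "\<dots> \<le> c * (1 / (- l))" by (intro mult_left_mono t_exp_bound l t c)
        finally show ?thesis by simp
      qed
      moreover have "l\<^sup>2 * expectation (\<lambda>\<omega>. (J \<omega>)\<^sup>2) \<le> c / (- l)"
      proof -
        have "l\<^sup>2 * expectation (\<lambda>\<omega>. (J \<omega>)\<^sup>2) \<le> l\<^sup>2 * (c / (- l)^3)"
          using JB(3) by (intro mult_left_mono) auto
        also have "\<dots> = c / (- l)" using l by (simp add: power2_eq_square power3_eq_cube field_simps)
        finally show ?thesis .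
      qed
      ultimately show ?thesis unfolding K_def by (intro mult_left_mono) linarith+
    qed
    finally show ?thesis using xtm xi by simp
  qed
  then show ?thesis by blast
qed

lemma BM_lin:
  fixes B :: "real \<Rightarrow> 'a \<Rightarrow> real^'d" and w :: "'d \<Rightarrow> real"
  assumes BM: "std_BM M B"
  shows "prob_space M"
    "\<And>t. t \<ge> 0 \<Longrightarrow> (\<lambda>\<omega>. \<Sum>j\<in>UNIV. w j * B t \<omega> $ j) \<in> borel_measurable M"
    "\<And>\<omega>. \<omega> \<in> space M \<Longrightarrow> continuous_on {0..} (\<lambda>t. \<Sum>j\<in>UNIV. w j * B t \<omega> $ j)"
    "\<And>\<omega>. \<omega> \<in> space M \<Longrightarrow> (\<Sum>j\<in>UNIV. w j * B 0 \<omega> $ j) = 0"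
    "\<And>s t. 0 \<le> s \<Longrightarrow> s \<le> t \<Longrightarrow>
       integrable M (\<lambda>\<omega>. ((\<Sum>j\<in>UNIV. w j * B t \<omega> $ j) - (\<Sum>j\<in>UNIV. w j * B s \<omega> $ j))\<^sup>2) \<and>
       prob_space.expectation M (\<lambda>\<omega>. ((\<Sum>j\<in>UNIV. w j * B t \<omega> $ j) - (\<Sum>j\<in>UNIV. w j * B s \<omega> $ j))\<^sup>2)
         \<le> (real CARD('d) * (\<Sum>j\<in>UNIV. (w j)\<^sup>2)) * (t - s)"
    "\<And>t. t \<ge> 0 \<Longrightarrow> integrable M (\<lambda>\<omega>. \<Sum>j\<in>UNIV. w j * B t \<omega> $ j) \<and>
        prob_space.expectation M (\<lambda>\<omega>. \<Sum>j\<in>UNIV. w j * B t \<omega> $ j) = 0"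
proof -
  have B1: "std_BM1 M (\<lambda>t \<omega>. B t \<omega> $ j)" for j using BM by (simp add: std_BM_def)
  show P: "prob_space M" using B1 by (simp add: std_BM1_def)
  interpret prob_space M by (rule P)
  have Bm: "(\<lambda>\<omega>. B t \<omega> $ j) \<in> borel_measurable M" if "t \<ge> 0" for t j
    using B1[of j] that by (simp add: std_BM1_def)
  show "(\<lambda>\<omega>. \<Sum>j\<in>UNIV. w j * B t \<omega> $ j) \<in> borel_measurable M" if "t \<ge> 0" for t
    using Bm[OF that] by measurable
  show "continuous_on {0..} (\<lambda>t. \<Sum>j\<in>UNIV. w j * B t \<omega> $ j)" if "\<omega> \<in> space M" for \<omega>
  proof (intro continuous_on_sum continuous_on_mult_left)
    fix j show "continuous_on {0..} (\<lambda>t. B t \<omega> $ j)" using B1[of j] that by (simp add: std_BM1_def)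
  qed
  show "(\<Sum>j\<in>UNIV. w j * B 0 \<omega> $ j) = 0" if "\<omega> \<in> space M" for \<omega>
    using B1 that by (simp add: std_BM1_def)
  show "integrable M (\<lambda>\<omega>. ((\<Sum>j\<in>UNIV. w j * B t \<omega> $ j) - (\<Sum>j\<in>UNIV. w j * B s \<omega> $ j))\<^sup>2) \<and>
       expectation (\<lambda>\<omega>. ((\<Sum>j\<in>UNIV. w j * B t \<omega> $ j) - (\<Sum>j\<in>UNIV. w j * B s \<omega> $ j))\<^sup>2)
         \<le> (real CARD('d) * (\<Sum>j\<in>UNIV. (w j)\<^sup>2)) * (t - s)" if st: "0 \<le> s" "s \<le> t" for s t
  proof -
    note I = BM1_incr[OF B1 st]
    define D where "D \<omega> = ((\<Sum>j\<in>UNIV. w j * B t \<omega> $ j) - (\<Sum>j\<in>UNIV. w j * B s \<omega> $ j))\<^sup>2" for \<omega>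
    define U where "U \<omega> = (\<Sum>j\<in>UNIV. (w j)\<^sup>2) * (\<Sum>j\<in>UNIV. (B t \<omega> $ j - B s \<omega> $ j)\<^sup>2)" for \<omega>
    have t0: "0 \<le> t" using st by simp
    have [measurable]: "(\<lambda>\<omega>. B t \<omega> $ j) \<in> borel_measurable M" for j using Bm[OF t0] .
    have [measurable]: "(\<lambda>\<omega>. B s \<omega> $ j) \<in> borel_measurable M" for j using Bm[OF st(1)] .
    have Dm: "D \<in> borel_measurable M" unfolding D_def by measurable
    have Ui: "integrable M U" unfolding U_def using I(1) by simp
    have DU: "D \<omega> \<le> U \<omega>" for \<omega>
    proof -
      have "D \<omega> = (\<Sum>j\<in>UNIV. w j * (B t \<omega> $ j - B s \<omega> $ j))\<^sup>2"
        unfolding D_def by (simp add: sum_subtractf[symmetric] right_diff_distrib)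
      also have "\<dots> \<le> U \<omega>" unfolding U_def by (rule Cauchy_Schwarz_ineq_sum)
      finally show ?thesis .
    qed
    have Di: "integrable M D"
    proof (rule Bochner_Integration.integrable_bound[OF Ui Dm])
      show "AE \<omega> in M. norm (D \<omega>) \<le> norm (U \<omega>)"
      proof (rule AE_I2)
        fix \<omega>
        have "0 \<le> D \<omega>" by (simp add: D_def)
        then show "norm (D \<omega>) \<le> norm (U \<omega>)" using DU[of \<omega>] by simp
      qed
    qed
    have "expectation D \<le> expectation U" by (rule integral_mono[OF Di Ui DU])
    also have "expectation U = (\<Sum>j\<in>UNIV. (w j)\<^sup>2) * (\<Sum>j\<in>UNIV. expectation (\<lambda>\<omega>. (B t \<omega> $ j - B s \<omega> $ j)\<^sup>2))"
      unfolding U_def using I(1) by simp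
    also have "\<dots> = (real CARD('d) * (\<Sum>j\<in>UNIV. (w j)\<^sup>2)) * (t - s)"
      using I(2) by simp
    finally show ?thesis using Di unfolding D_def[abs_def] by simp
  qed
  show "integrable M (\<lambda>\<omega>. \<Sum>j\<in>UNIV. w j * B t \<omega> $ j) \<and>
        expectation (\<lambda>\<omega>. \<Sum>j\<in>UNIV. w j * B t \<omega> $ j) = 0" if t: "t \<ge> 0" for t
  proof -
    have z: "B 0 \<omega> $ j = 0" if "\<omega> \<in> space M" for \<omega> j
      using B1[of j] that by (simp add: std_BM1_def)
    have i: "integrable M (\<lambda>\<omega>. B t \<omega> $ j)" for j
    proof -
      have "integrable M (\<lambda>\<omega>. B t \<omega> $ j - B 0 \<omega> $ j) = integrable M (\<lambda>\<omega>. B t \<omega> $ j)"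
        by (rule Bochner_Integration.integrable_cong) (auto simp: z)
      then show ?thesis using BM1_incr(3)[OF B1 order_refl t] by simp
    qed
    have e: "expectation (\<lambda>\<omega>. B t \<omega> $ j) = 0" for j
    proof -
      have "expectation (\<lambda>\<omega>. B t \<omega> $ j) = expectation (\<lambda>\<omega>. B t \<omega> $ j - B 0 \<omega> $ j)"
        by (rule Bochner_Integration.integral_cong) (auto simp: z)
      then show ?thesis using BM1_incr(4)[OF B1 order_refl t] by simp
    qed
    show ?thesis using i e by simp
  qed
qed

lemma vector_4 [simp]:
 "(vector [a,b,c,d] ::('a::zero)^4)$1 = a"
 "(vector [a,b,c,d] ::('a::zero)^4)$2 = b"
 "(vector [a,b,c,d] ::('a::zero)^4)$3 = c"
 "(vector [a,b,c,d] ::('a::zero)^4)$4 = d"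
  unfolding vector_def by (simp_all add: fun_upd_def)

lemma Ce_comp:
  fixes v :: "real^3" and C0 bh gh bv gv :: real
  defines "ih \<equiv> ih_e C0 bh gh bv gv" and "iv \<equiv> iv_e C0 bh gh bv gv"
      and "sh \<equiv> sh_e C0 bh gh bv gv" and "sv \<equiv> sv_e C0 bh gh bv gv"
  shows "(C_e C0 bh gh bv gv *v v) $ 1 = -(gh + bh * iv) * v$1 + bh * sh * v$3"
    "(C_e C0 bh gh bv gv *v v) $ 2 = -(bv * sv) * v$1 - bv * ih * v$2 + gv * v$3"
    "(C_e C0 bh gh bv gv *v v) $ 3 = (bv * sv) * v$1 + bv * ih * v$2 - gv * v$3"
  by (simp_all add: C_e_def Let_def matrix_vector_mult_def sum_3 ih_def iv_def sh_def sv_def)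

lemma sig_comp:
  fixes b :: "real^4" and C0 bh gh bv gv :: real
  defines "ih \<equiv> ih_e C0 bh gh bv gv" and "iv \<equiv> iv_e C0 bh gh bv gv"
      and "sh \<equiv> sh_e C0 bh gh bv gv" and "sv \<equiv> sv_e C0 bh gh bv gv"
  shows "(sigma_e C0 bh gh bv gv *v b) $ 2 + (sigma_e C0 bh gh bv gv *v b) $ 3
       = sqrt (gv * (C0 + sv)) * b$2 + sqrt (gv * iv) * b$4"
  by (simp add: sigma_e_def Let_def matrix_vector_mult_def sum_4 ih_def iv_def sh_def sv_def)

lemma sq_int_imp_int:
  fixes f :: "'a \<Rightarrow> real"
  assumes P: "prob_space M" and m: "f \<in> borel_measurable M" and i: "integrable M (\<lambda>x. (f x)\<^sup>2)"
  shows "integrable M f"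
proof -
  interpret prob_space M by (rule P)
  have "integrable M (\<lambda>x. 1 + (f x)\<^sup>2)" using i by simp
  then show ?thesis
  proof (rule Bochner_Integration.integrable_bound[OF _ m])
    show "AE x in M. norm (f x) \<le> norm (1 + (f x)\<^sup>2)"
    proof (rule AE_I2)
      fix x
      have "\<bar>f x\<bar> \<le> 1 + (f x)\<^sup>2"
      proof (cases "\<bar>f x\<bar> \<le> 1")
        case True
        have "0 \<le> (f x)\<^sup>2" by simp
        then show ?thesis using True by linarith
      next
        case False
        then have "\<bar>f x\<bar> * 1 \<le> \<bar>f x\<bar> * \<bar>f x\<bar>" by (intro mult_left_mono) auto
        also have "\<bar>f x\<bar> * \<bar>f x\<bar> = (f x)\<^sup>2" by (simp add: power2_eq_square abs_mult_self_eq)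
        finally show ?thesis by simp
      qed
      then show "norm (f x) \<le> norm (1 + (f x)\<^sup>2)" by simp
    qed
  qed
qed

lemma sq_lower: "((u::real) + v)\<^sup>2 \<ge> u\<^sup>2 / 2 - v\<^sup>2"
proof -
  have "(u + v)\<^sup>2 - (u\<^sup>2 / 2 - v\<^sup>2) = (u + 2 * v)\<^sup>2 / 2"
    by (simp add: power2_eq_square algebra_simps)
  moreover have "(u + 2 * v)\<^sup>2 / 2 \<ge> 0" by simp
  ultimately show ?thesis by linarith
qed

lemma sq2: "((u::real) + v)\<^sup>2 \<le> 2 * (u\<^sup>2 + v\<^sup>2)"
proof -
  have "2 * (u\<^sup>2 + v\<^sup>2) - (u + v)\<^sup>2 = (u - v)\<^sup>2"
    by (simp add: power2_eq_square algebra_simps)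
  moreover have "(u - v)\<^sup>2 \<ge> 0" by simp
  ultimately show ?thesis by linarith
qed

lemma var_to_infty:
  fixes M :: "'a measure" and X W z1 z2 :: "real \<Rightarrow> 'a \<Rightarrow> real" and Y0 :: "'a \<Rightarrow> real"
  assumes P: "prob_space M"
    and a: "a \<noteq> 0" and kappa: "\<kappa> > 0"
    and Y0m: "Y0 \<in> borel_measurable M" and Y0i: "integrable M (\<lambda>\<omega>. (Y0 \<omega>)\<^sup>2)"
    and W: "\<And>t. t \<ge> 0 \<Longrightarrow> W t \<in> borel_measurable M \<and> integrable M (W t) \<and>
              prob_space.expectation M (W t) = 0 \<and> integrable M (\<lambda>\<omega>. (W t \<omega>)\<^sup>2) \<and>
              prob_space.expectation M (\<lambda>\<omega>. (W t \<omega>)\<^sup>2) \<ge> \<kappa> * t"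
    and z1: "\<And>t. t \<ge> 0 \<Longrightarrow> z1 t \<in> borel_measurable M \<and> integrable M (\<lambda>\<omega>. (z1 t \<omega>)\<^sup>2) \<and>
              prob_space.expectation M (\<lambda>\<omega>. (z1 t \<omega>)\<^sup>2) \<le> K1"
    and z2: "\<And>t. t \<ge> 0 \<Longrightarrow> z2 t \<in> borel_measurable M \<and> integrable M (\<lambda>\<omega>. (z2 t \<omega>)\<^sup>2) \<and>
              prob_space.expectation M (\<lambda>\<omega>. (z2 t \<omega>)\<^sup>2) \<le> K2"
    and X: "\<And>t \<omega>. t \<ge> 0 \<Longrightarrow> \<omega> \<in> space M \<Longrightarrow> X t \<omega> = a * (Y0 \<omega> + W t \<omega>) + c1 * z1 t \<omega> + c2 * z2 t \<omega>"
  shows "filterlim (\<lambda>t. prob_space.variance M (X t)) at_top at_top"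
proof -
  interpret prob_space M by (rule P)
  define KR where "KR = 3 * (a\<^sup>2 * expectation (\<lambda>\<omega>. (Y0 \<omega>)\<^sup>2) + c1\<^sup>2 * K1 + c2\<^sup>2 * K2)"
  define A where "A = a\<^sup>2 * \<kappa> / 2"
  have A: "A > 0" using a kappa by (simp add: A_def)
  have bound: "variance (X t) \<ge> A * t - 2 * KR" if t: "t \<ge> 0" for t
  proof -
    define R where "R \<omega> = a * Y0 \<omega> + c1 * z1 t \<omega> + c2 * z2 t \<omega>" for \<omega>
    note Wt = W[OF t] and z1t = z1[OF t] and z2t = z2[OF t]
    have [measurable]: "Y0 \<in> borel_measurable M" "W t \<in> borel_measurable M"
      "z1 t \<in> borel_measurable M" "z2 t \<in> borel_measurable M" using Y0m Wt z1t z2t by auto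
    have Rm: "R \<in> borel_measurable M" unfolding R_def by measurable
    define F where "F \<omega> = 3 * (a\<^sup>2 * (Y0 \<omega>)\<^sup>2 + c1\<^sup>2 * (z1 t \<omega>)\<^sup>2 + c2\<^sup>2 * (z2 t \<omega>)\<^sup>2)" for \<omega>
    have Fi: "integrable M F" unfolding F_def using Y0i z1t z2t by simp
    have RF: "(R \<omega>)\<^sup>2 \<le> F \<omega>" for \<omega>
      unfolding R_def F_def using sq3[of "a * Y0 \<omega>" "c1 * z1 t \<omega>" "c2 * z2 t \<omega>"]
      by (simp only: power_mult_distrib)
    have R2i: "integrable M (\<lambda>\<omega>. (R \<omega>)\<^sup>2)"
    proof (rule Bochner_Integration.integrable_bound[OF Fi])
      show "(\<lambda>\<omega>. (R \<omega>)\<^sup>2) \<in> borel_measurable M" using Rm by measurable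
      show "AE \<omega> in M. norm ((R \<omega>)\<^sup>2) \<le> norm (F \<omega>)"
      proof (rule AE_I2)
        fix \<omega>
        have "(R \<omega>)\<^sup>2 \<le> F \<omega>" by (rule RF)
        then show "norm ((R \<omega>)\<^sup>2) \<le> norm (F \<omega>)" by simp
      qed
    qed
    have Ri: "integrable M R" by (rule sq_int_imp_int[OF P Rm R2i])
    have ER2: "expectation (\<lambda>\<omega>. (R \<omega>)\<^sup>2) \<le> KR"
    proof -
      have "expectation (\<lambda>\<omega>. (R \<omega>)\<^sup>2) \<le> expectation F" by (rule integral_mono[OF R2i Fi RF])
      also have "expectation F = 3 * (a\<^sup>2 * expectation (\<lambda>\<omega>. (Y0 \<omega>)\<^sup>2) + c1\<^sup>2 * expectation (\<lambda>\<omega>. (z1 t \<omega>)\<^sup>2)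
           + c2\<^sup>2 * expectation (\<lambda>\<omega>. (z2 t \<omega>)\<^sup>2))"
        unfolding F_def using Y0i z1t z2t by simp
      also have "\<dots> \<le> KR" unfolding KR_def
        using z1t z2t by (intro mult_left_mono add_mono mult_left_mono) auto
      finally show ?thesis .
    qed
    have VR: "(expectation R)\<^sup>2 \<le> expectation (\<lambda>\<omega>. (R \<omega>)\<^sup>2)"
    proof -
      have "0 \<le> variance R" by simp
      then show ?thesis using variance_eq[OF Ri R2i] by simp
    qed
    have Xe: "X t \<omega> = a * W t \<omega> + R \<omega>" if "\<omega> \<in> space M" for \<omega>
      using X[OF t that] by (simp add: R_def algebra_simps)
    have Xm: "X t \<in> borel_measurable M"
    proof -
      have "(\<lambda>\<omega>. a * W t \<omega> + R \<omega>) \<in> borel_measurable M" using Rm by measurable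
      then show ?thesis by (rule measurable_cong[THEN iffD1, rotated]) (simp add: Xe)
    qed
    have X2i: "integrable M (\<lambda>\<omega>. (X t \<omega>)\<^sup>2)"
    proof (rule Bochner_Integration.integrable_bound)
      show "integrable M (\<lambda>\<omega>. 2 * ((a * W t \<omega>)\<^sup>2 + (R \<omega>)\<^sup>2))"
        using Wt R2i by (simp add: power_mult_distrib)
      show "(\<lambda>\<omega>. (X t \<omega>)\<^sup>2) \<in> borel_measurable M" using Xm by measurable
      show "AE \<omega> in M. norm ((X t \<omega>)\<^sup>2) \<le> norm (2 * ((a * W t \<omega>)\<^sup>2 + (R \<omega>)\<^sup>2))"
      proof (rule AE_I2)
        fix \<omega> assume w: "\<omega> \<in> space M"
        have "(X t \<omega>)\<^sup>2 \<le> 2 * ((a * W t \<omega>)\<^sup>2 + (R \<omega>)\<^sup>2)" unfolding Xe[OF w] by (rule sq2)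
        then show "norm ((X t \<omega>)\<^sup>2) \<le> norm (2 * ((a * W t \<omega>)\<^sup>2 + (R \<omega>)\<^sup>2))" by simp
      qed
    qed
    have Xi: "integrable M (X t)" by (rule sq_int_imp_int[OF P Xm X2i])
    have EX: "expectation (X t) = expectation R"
    proof -
      have "expectation (X t) = expectation (\<lambda>\<omega>. a * W t \<omega> + R \<omega>)"
        by (rule Bochner_Integration.integral_cong) (auto simp: Xe)
      also have "\<dots> = a * expectation (W t) + expectation R" using Wt Ri by simp
      finally show ?thesis using Wt by simp
    qed
    have EX2: "expectation (\<lambda>\<omega>. (X t \<omega>)\<^sup>2) \<ge> a\<^sup>2 / 2 * expectation (\<lambda>\<omega>. (W t \<omega>)\<^sup>2) - expectation (\<lambda>\<omega>. (R \<omega>)\<^sup>2)"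
    proof -
      have "expectation (\<lambda>\<omega>. a\<^sup>2 / 2 * (W t \<omega>)\<^sup>2 - (R \<omega>)\<^sup>2) \<le> expectation (\<lambda>\<omega>. (X t \<omega>)\<^sup>2)"
      proof (rule integral_mono)
        show "integrable M (\<lambda>\<omega>. a\<^sup>2 / 2 * (W t \<omega>)\<^sup>2 - (R \<omega>)\<^sup>2)" using Wt R2i by simp
        show "integrable M (\<lambda>\<omega>. (X t \<omega>)\<^sup>2)" by (rule X2i)
        fix \<omega> assume w: "\<omega> \<in> space M"
        show "a\<^sup>2 / 2 * (W t \<omega>)\<^sup>2 - (R \<omega>)\<^sup>2 \<le> (X t \<omega>)\<^sup>2"
          unfolding Xe[OF w] using sq_lower[of "a * W t \<omega>" "R \<omega>"] by (simp add: power_mult_distrib)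
      qed
      then show ?thesis using Wt R2i by simp
    qed
    have "variance (X t) = expectation (\<lambda>\<omega>. (X t \<omega>)\<^sup>2) - (expectation (X t))\<^sup>2"
      by (rule variance_eq[OF Xi X2i])
    also have "\<dots> \<ge> a\<^sup>2 / 2 * (\<kappa> * t) - KR - KR"
    proof -
      have "a\<^sup>2 / 2 * (\<kappa> * t) \<le> a\<^sup>2 / 2 * expectation (\<lambda>\<omega>. (W t \<omega>)\<^sup>2)"
        using Wt by (intro mult_left_mono) auto
      then show ?thesis unfolding EX using EX2 ER2 VR by linarith
    qed
    finally show ?thesis by (simp add: A_def)
  qed
  show ?thesis
  proof (subst filterlim_at_top, intro allI)
    fix Z :: real
    show "\<forall>\<^sub>F t in at_top. Z \<le> variance (X t)"
    proof (rule eventually_at_top_linorder[THEN iffD2], intro exI allI impI)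
      fix t assume t: "t \<ge> max 0 ((Z + 2 * KR) / A)"
      then have t0: "t \<ge> 0" and t1: "(Z + 2 * KR) / A \<le> t" by auto
      from t1 A have "Z + 2 * KR \<le> A * t" by (simp add: pos_divide_le_eq mult.commute)
      then show "Z \<le> variance (X t)" using bound[OF t0] by linarith
    qed
  qed
qed

lemma lin_path:
  fixes Phi :: "real \<Rightarrow> real^3" and C :: "real^3^3" and S :: "real^4^3"
    and bt :: "real \<Rightarrow> real^4" and u :: "real^3" and l t :: real
  assumes cont: "continuous_on {0..} Phi"
    and sde: "\<And>t. t \<ge> 0 \<Longrightarrow> Phi t = Phi 0 + integral {0..t} (\<lambda>s. C *v Phi s) + S *v bt t"
    and eig: "\<And>v. (C *v v) \<bullet> u = l * (v \<bullet> u)"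
    and t: "t \<ge> 0"
  shows "Phi t \<bullet> u = Phi 0 \<bullet> u + l * integral {0..t} (\<lambda>s. Phi s \<bullet> u) + (S *v bt t) \<bullet> u"
proof -
  have ct: "continuous_on {0..t} Phi" using cont by (rule continuous_on_subset) auto
  have "continuous_on {0..t} (\<lambda>s. C *v Phi s)"
    using continuous_on_compose[OF ct matrix_vector_mult_linear_continuous_on[of _ C]] by (simp add: o_def)
  then have int: "(\<lambda>s. C *v Phi s) integrable_on {0..t}" by (rule integrable_continuous_interval)
  have "integral {0..t} (\<lambda>s. C *v Phi s) \<bullet> u = integral {0..t} (\<lambda>s. (C *v Phi s) \<bullet> u)"
    by (rule integral_component_eq[OF int, symmetric])
  also have "\<dots> = integral {0..t} (\<lambda>s. l * (Phi s \<bullet> u))" by (simp add: eig)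
  also have "\<dots> = l * integral {0..t} (\<lambda>s. Phi s \<bullet> u)" by simp
  finally have "integral {0..t} (\<lambda>s. C *v Phi s) \<bullet> u = l * integral {0..t} (\<lambda>s. Phi s \<bullet> u)" .
  then show ?thesis using sde[OF t] by (simp add: inner_add_left)
qed

lemma noise_form:
  fixes S :: "real^'m^'n" and b :: "real^'m" and u :: "real^'n"
  shows "(S *v b) \<bullet> u = (\<Sum>j\<in>UNIV. (\<Sum>i\<in>UNIV. S$i$j * u$i) * b$j)"
proof -
  have "(S *v b) \<bullet> u = (\<Sum>i\<in>UNIV. (\<Sum>j\<in>UNIV. S$i$j * b$j) * u$i)"
    by (simp add: inner_vec_def matrix_vector_mult_def)
  also have "\<dots> = (\<Sum>i\<in>UNIV. \<Sum>j\<in>UNIV. S$i$j * u$i * b$j)"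
    by (rule sum.cong[OF refl]) (simp add: sum_distrib_right sum_distrib_left mult.commute mult.left_commute)
  also have "\<dots> = (\<Sum>j\<in>UNIV. \<Sum>i\<in>UNIV. S$i$j * u$i * b$j)"
    by (rule sum.swap)
  also have "\<dots> = (\<Sum>j\<in>UNIV. (\<Sum>i\<in>UNIV. S$i$j * u$i) * b$j)"
    by (simp add: sum_distrib_right)
  finally show ?thesis .
qed

lemma eig_alg:
  fixes \<alpha> \<beta> \<gamma> \<epsilon> g \<mu> k v1 v2 v3 :: real
  assumes mu: "\<mu> \<noteq> 0" and k: "k = (\<mu> + \<alpha>) * \<epsilon> / \<mu>" and ch: "(\<mu> + \<alpha>) * (\<mu> + \<epsilon> + g) = \<beta> * \<gamma>"
  shows "(- \<alpha> * v1 + \<beta> * v3) * \<gamma> + (- \<gamma> * v1 - \<epsilon> * v2 + g * v3) * k + (\<gamma> * v1 + \<epsilon> * v2 - g * v3) * (\<mu> + \<alpha> + k)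
       = \<mu> * (v1 * \<gamma> + v2 * k + v3 * (\<mu> + \<alpha> + k))"
proof -
  have E1: "(\<mu> + \<alpha>) * \<epsilon> - \<mu> * k = 0" using mu k by (simp add: field_simps)
  have E2: "\<beta> * \<gamma> - (\<mu> + \<alpha>) * (\<mu> + \<epsilon> + g) = 0" using ch by simp
  have "(- \<alpha> * v1 + \<beta> * v3) * \<gamma> + (- \<gamma> * v1 - \<epsilon> * v2 + g * v3) * k + (\<gamma> * v1 + \<epsilon> * v2 - g * v3) * (\<mu> + \<alpha> + k)
       - \<mu> * (v1 * \<gamma> + v2 * k + v3 * (\<mu> + \<alpha> + k))
       = v2 * ((\<mu> + \<alpha>) * \<epsilon> - \<mu> * k) + v3 * ((\<beta> * \<gamma> - (\<mu> + \<alpha>) * (\<mu> + \<epsilon> + g)) + ((\<mu> + \<alpha>) * \<epsilon> - \<mu> * k))"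
    by (simp add: algebra_simps)
  then show ?thesis using E1 E2 by simp
qed

lemma decomp_alg:
  fixes \<alpha> \<beta> \<gamma> \<epsilon> g ma mb ka kb va vb vc :: real
  assumes g0: "\<gamma> \<noteq> 0" and ne: "ma \<noteq> mb" and m1: "ma \<noteq> 0" and m2: "mb \<noteq> 0"
    and ka: "ka = (ma + \<alpha>) * \<epsilon> / ma" and kb: "kb = (mb + \<alpha>) * \<epsilon> / mb"
    and prod: "ma * mb = \<alpha> * (\<epsilon> + g) - \<beta> * \<gamma>" and sum: "ma + mb = - (\<alpha> + \<epsilon> + g)"
  defines "Y \<equiv> vb + vc"
    and "za \<equiv> va * \<gamma> + vb * ka + vc * (ma + \<alpha> + ka)"
    and "zb \<equiv> va * \<gamma> + vb * kb + vc * (mb + \<alpha> + kb)"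
  shows "vc = (\<alpha> * \<epsilon> / (ma * mb)) * Y + (1 / (ma - mb)) * za + (- 1 / (ma - mb)) * zb"
    "vb = ((\<alpha> * g - \<beta> * \<gamma>) / (ma * mb)) * Y + (- 1 / (ma - mb)) * za + (1 / (ma - mb)) * zb"
    "va = (\<beta> * \<epsilon> / (ma * mb)) * Y + ((1 - (ma + \<alpha>) / (ma - mb)) / \<gamma>) * za
          + (((ma + \<alpha>) / (ma - mb)) / \<gamma>) * zb"
proof -
  have d: "ma - mb \<noteq> 0" using ne by simp
  have kd: "ka - kb = - (\<alpha> * \<epsilon> / (ma * mb)) * (ma - mb)"
    using m1 m2 by (simp add: ka kb field_simps)
  have zd: "za - zb = (ka - kb) * Y + (ma - mb) * vc"
    by (simp add: za_def zb_def Y_def algebra_simps)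
  have vce: "vc = (\<alpha> * \<epsilon> / (ma * mb)) * Y + (za - zb) / (ma - mb)"
  proof -
    have "(za - zb) / (ma - mb) = - (\<alpha> * \<epsilon> / (ma * mb)) * Y + vc"
      unfolding zd kd using d by (simp add: field_simps)
    then show ?thesis by simp
  qed
  show V3: "vc = (\<alpha> * \<epsilon> / (ma * mb)) * Y + (1 / (ma - mb)) * za + (- 1 / (ma - mb)) * zb"
    using vce by (simp add: diff_divide_distrib)
  have det: "ma * mb \<noteq> 0" using m1 m2 by simp
  have ay: "(\<alpha> * g - \<beta> * \<gamma>) / (ma * mb) = 1 - \<alpha> * \<epsilon> / (ma * mb)"
  proof -
    have "\<alpha> * g - \<beta> * \<gamma> = ma * mb - \<alpha> * \<epsilon>" using prod by (simp add: algebra_simps)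
    then have "(\<alpha> * g - \<beta> * \<gamma>) / (ma * mb) = (ma * mb - \<alpha> * \<epsilon>) / (ma * mb)" by simp
    also have "\<dots> = 1 - \<alpha> * \<epsilon> / (ma * mb)" using det by (simp add: diff_divide_distrib)
    finally show ?thesis .
  qed
  show "vb = ((\<alpha> * g - \<beta> * \<gamma>) / (ma * mb)) * Y + (- 1 / (ma - mb)) * za + (1 / (ma - mb)) * zb"
  proof -
    have "vb = Y - vc" by (simp add: Y_def)
    also have "\<dots> = (1 - \<alpha> * \<epsilon> / (ma * mb)) * Y - (1 / (ma - mb)) * za - (- 1 / (ma - mb)) * zb"
      by (subst V3) (simp add: algebra_simps)
    finally show ?thesis unfolding ay by simp
  qed
  have gva: "\<gamma> * va = za - ka * Y - (ma + \<alpha>) * vc"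
    by (simp add: za_def Y_def algebra_simps)
  have pa: "(ma + \<alpha>) * (mb + \<alpha>) = - \<beta> * \<gamma>"
  proof -
    have "(ma + \<alpha>) * (mb + \<alpha>) = ma * mb + \<alpha> * (ma + mb) + \<alpha> * \<alpha>" by (simp add: algebra_simps)
    also have "\<dots> = - \<beta> * \<gamma>" unfolding prod sum by (simp add: algebra_simps)
    finally show ?thesis .
  qed
  have ax: "- ka - (ma + \<alpha>) * (\<alpha> * \<epsilon> / (ma * mb)) = \<gamma> * (\<beta> * \<epsilon> / (ma * mb))"
  proof -
    have "- ka - (ma + \<alpha>) * (\<alpha> * \<epsilon> / (ma * mb)) = - ((ma + \<alpha>) * (mb + \<alpha>)) * \<epsilon> / (ma * mb)"
      using m1 m2 by (simp add: ka field_simps)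
    also have "\<dots> = \<gamma> * (\<beta> * \<epsilon> / (ma * mb))" unfolding pa by simp
    finally show ?thesis .
  qed
  show "va = (\<beta> * \<epsilon> / (ma * mb)) * Y + ((1 - (ma + \<alpha>) / (ma - mb)) / \<gamma>) * za
          + (((ma + \<alpha>) / (ma - mb)) / \<gamma>) * zb"
  proof -
    have "\<gamma> * va = (- ka - (ma + \<alpha>) * (\<alpha> * \<epsilon> / (ma * mb))) * Y + (1 - (ma + \<alpha>) / (ma - mb)) * za
          + ((ma + \<alpha>) / (ma - mb)) * zb"
      unfolding gva by (subst V3) (simp add: algebra_simps)
    also have "\<dots> = \<gamma> * (\<beta> * \<epsilon> / (ma * mb)) * Y + (1 - (ma + \<alpha>) / (ma - mb)) * za
          + ((ma + \<alpha>) / (ma - mb)) * zb"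
      unfolding ax by simp
    also have "\<dots> = \<gamma> * ((\<beta> * \<epsilon> / (ma * mb)) * Y + ((1 - (ma + \<alpha>) / (ma - mb)) / \<gamma>) * za
          + (((ma + \<alpha>) / (ma - mb)) / \<gamma>) * zb)"
    proof -
      have e1: "\<gamma> * (((1 - (ma + \<alpha>) / (ma - mb)) / \<gamma>) * za) = (1 - (ma + \<alpha>) / (ma - mb)) * za"
        using g0 by simp
      have e2: "\<gamma> * ((((ma + \<alpha>) / (ma - mb)) / \<gamma>) * zb) = ((ma + \<alpha>) / (ma - mb)) * zb"
        using g0 by simp
      show ?thesis unfolding distrib_left e1 e2 by (simp only: mult.assoc)
    qed
    finally show ?thesis using g0 by simp
  qed
qed

lemma eigvals:
  fixes \<alpha> \<beta> \<gamma> \<epsilon> g :: real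
  assumes pos: "\<alpha> > 0" "\<beta> > 0" "\<gamma> > 0" "\<epsilon> > 0" "g > 0" and det: "\<alpha> * (\<epsilon> + g) - \<beta> * \<gamma> > 0"
  obtains \<mu>1 \<mu>2 where "\<mu>1 \<noteq> \<mu>2" "\<mu>1 < 0" "\<mu>2 < 0"
    "(\<mu>1 + \<alpha>) * (\<mu>1 + \<epsilon> + g) = \<beta> * \<gamma>" "(\<mu>2 + \<alpha>) * (\<mu>2 + \<epsilon> + g) = \<beta> * \<gamma>"
    "\<mu>1 * \<mu>2 = \<alpha> * (\<epsilon> + g) - \<beta> * \<gamma>" "\<mu>1 + \<mu>2 = - (\<alpha> + \<epsilon> + g)"
proof -
  define S where "S = \<alpha> + \<epsilon> + g"
  define dt where "dt = \<alpha> * (\<epsilon> + g) - \<beta> * \<gamma>"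
  define D where "D = S\<^sup>2 - 4 * dt"
  have D: "D = (\<alpha> - (\<epsilon> + g))\<^sup>2 + 4 * (\<beta> * \<gamma>)"
    by (simp add: D_def S_def dt_def power2_eq_square algebra_simps)
  have Dpos: "D > 0" unfolding D using pos by (intro add_nonneg_pos) auto
  define r where "r = sqrt D"
  have r: "r > 0" "r * r = D" using Dpos by (auto simp: r_def)
  have S: "S > 0" using pos by (simp add: S_def)
  have rS: "r < S"
  proof -
    have "D < S\<^sup>2" using det by (simp add: D_def dt_def)
    then have "sqrt D < sqrt (S\<^sup>2)" by (rule real_sqrt_less_mono)
    then show ?thesis using S by (simp add: r_def)
  qed
  define \<mu>1 where "\<mu>1 = (- S + r) / 2"
  define \<mu>2 where "\<mu>2 = (- S - r) / 2"
  have ch: "(\<mu> + \<alpha>) * (\<mu> + \<epsilon> + g) = \<beta> * \<gamma>" if "\<mu> = \<mu>1 \<or> \<mu> = \<mu>2" for \<mu>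
  proof -
    have "r = 2 * \<mu> + S \<or> r = - (2 * \<mu> + S)" using that by (auto simp: \<mu>1_def \<mu>2_def)
    then have "(2 * \<mu> + S) * (2 * \<mu> + S) = r * r"
    proof (elim disjE)
      assume h: "r = 2 * \<mu> + S" show ?thesis unfolding h ..
    next
      assume h: "r = - (2 * \<mu> + S)" show ?thesis unfolding h by (simp only: minus_mult_minus)
    qed
    then have "(2 * \<mu> + S) * (2 * \<mu> + S) = S * S - 4 * dt" using r(2) by (simp add: D_def power2_eq_square)
    then have "4 * (\<mu> * \<mu> + S * \<mu> + dt) = 0" by (simp add: algebra_simps)
    then have "\<mu> * \<mu> + S * \<mu> + dt = 0" by simp
    then show ?thesis by (simp add: S_def dt_def algebra_simps)
  qed
  show ?thesis
  proof
    show "\<mu>1 \<noteq> \<mu>2" using r by (simp add: \<mu>1_def \<mu>2_def)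
    show "\<mu>1 < 0" using rS by (simp add: \<mu>1_def)
    show "\<mu>2 < 0" using r S by (simp add: \<mu>2_def)
    show "(\<mu>1 + \<alpha>) * (\<mu>1 + \<epsilon> + g) = \<beta> * \<gamma>" by (rule ch) simp
    show "(\<mu>2 + \<alpha>) * (\<mu>2 + \<epsilon> + g) = \<beta> * \<gamma>" by (rule ch) simp
    show "\<mu>1 * \<mu>2 = \<alpha> * (\<epsilon> + g) - \<beta> * \<gamma>"
      using r(2) unfolding \<mu>1_def \<mu>2_def D_def dt_def[symmetric] by (simp add: field_simps power2_eq_square)
    show "\<mu>1 + \<mu>2 = - (\<alpha> + \<epsilon> + g)" by (simp add: \<mu>1_def \<mu>2_def S_def field_simps)
  qed
qed

lemma equil_aux:
  fixes bh bv gh gv X Z :: real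
  assumes "bh > 0" "bv > 0" "X > 0" "Z > 0"
  shows "bh * (gh * Z / (bv * X)) * (bv * (gv * X / (bh * Z))) = gh * gv"
  using assms by (simp add: field_simps)

lemma equil:
  fixes C0 bh gh bv gv :: real
  assumes pos: "C0 > 0" "bh > 0" "gh > 0" "bv > 0" "gv > 0" and R: "R0 C0 bh gh bv gv > 1"
  shows "ih_e C0 bh gh bv gv > 0" "iv_e C0 bh gh bv gv > 0" "sh_e C0 bh gh bv gv > 0"
    "sv_e C0 bh gh bv gv > 0" "bh * sh_e C0 bh gh bv gv * (bv * sv_e C0 bh gh bv gv) = gh * gv"
    "iv_e C0 bh gh bv gv < C0"
proof -
  have "1 < (bh / gv) * (C0 * bv / gh)" using R by (simp add: R0_def)
  then have "gv * gh < C0 * bh * bv" using pos by (simp add: field_simps)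
  then have N: "C0 * bh * bv - gh * gv > 0" by (simp add: mult.commute)
  have d1: "C0 * bh * bv + bv * gh > 0" using pos by (simp add: add_pos_pos)
  have d2: "bh * bv + bh * gv > 0" using pos by (simp add: add_pos_pos)
  show "ih_e C0 bh gh bv gv > 0" unfolding ih_e_def using N d1 by simp
  show "iv_e C0 bh gh bv gv > 0" unfolding iv_e_def using N d2 by simp
  have sh: "sh_e C0 bh gh bv gv = gh * (bv + gv) / (bv * (C0 * bh + gh))"
    unfolding sh_e_def ih_e_def using pos d1 by (simp add: field_simps)
  have sv: "sv_e C0 bh gh bv gv = gv * (C0 * bh + gh) / (bh * (bv + gv))"
    unfolding sv_e_def iv_e_def using pos d2 by (simp add: field_simps)
  have p1: "C0 * bh + gh > 0" "bv + gv > 0" using pos by (auto simp: add_pos_pos)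
  show "sh_e C0 bh gh bv gv > 0" unfolding sh using pos p1 by simp
  show svp: "sv_e C0 bh gh bv gv > 0" unfolding sv using pos p1 by simp
  show "bh * sh_e C0 bh gh bv gv * (bv * sv_e C0 bh gh bv gv) = gh * gv"
    unfolding sh sv using equil_aux[of bh bv "C0 * bh + gh" "bv + gv" gh gv] pos p1 by simp
  show "iv_e C0 bh gh bv gv < C0" using svp by (simp add: sv_e_def)
qed

lemma BM_coord:
  fixes B :: "real \<Rightarrow> 'a \<Rightarrow> real^'d"
  assumes BM: "std_BM M B" and t: "t \<ge> 0"
  shows "integrable M (\<lambda>\<omega>. (B t \<omega> $ j)\<^sup>2) \<and> prob_space.expectation M (\<lambda>\<omega>. (B t \<omega> $ j)\<^sup>2) = t"
proof -
  have B1: "std_BM1 M (\<lambda>t \<omega>. B t \<omega> $ j)" using BM by (simp add: std_BM_def)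
  have z: "B 0 \<omega> $ j = 0" if "\<omega> \<in> space M" for \<omega> using B1 that by (simp add: std_BM1_def)
  note I = BM1_incr[OF B1 order_refl t]
  have "integrable M (\<lambda>\<omega>. (B t \<omega> $ j - B 0 \<omega> $ j)\<^sup>2) = integrable M (\<lambda>\<omega>. (B t \<omega> $ j)\<^sup>2)"
    by (rule Bochner_Integration.integrable_cong) (auto simp: z)
  moreover have "prob_space.expectation M (\<lambda>\<omega>. (B t \<omega> $ j - B 0 \<omega> $ j)\<^sup>2) = prob_space.expectation M (\<lambda>\<omega>. (B t \<omega> $ j)\<^sup>2)"
    by (rule Bochner_Integration.integral_cong) (auto simp: z)
  ultimately show ?thesis using I by simp
qed

lemma x0_sq_int:
  fixes X :: "'a \<Rightarrow> real^3" and u :: "real^3"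
  assumes P: "prob_space M" and m: "X \<in> borel_measurable M" and L2: "\<forall>k. integrable M (\<lambda>\<omega>. (X \<omega> $ k)\<^sup>2)"
  shows "(\<lambda>\<omega>. X \<omega> \<bullet> u) \<in> borel_measurable M" "integrable M (\<lambda>\<omega>. (X \<omega> \<bullet> u)\<^sup>2)"
proof -
  interpret prob_space M by (rule P)
  show m2: "(\<lambda>\<omega>. X \<omega> \<bullet> u) \<in> borel_measurable M" using m by measurable
  have ii: "integrable M (\<lambda>\<omega>. (X \<omega> \<bullet> X \<omega>) * (u \<bullet> u))"
    using L2 by (simp add: inner_vec_def sum_3 power2_eq_square)
  show "integrable M (\<lambda>\<omega>. (X \<omega> \<bullet> u)\<^sup>2)"
  proof (rule Bochner_Integration.integrable_bound[OF ii])
    show "(\<lambda>\<omega>. (X \<omega> \<bullet> u)\<^sup>2) \<in> borel_measurable M" using m2 by measurable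
    show "AE \<omega> in M. norm ((X \<omega> \<bullet> u)\<^sup>2) \<le> norm ((X \<omega> \<bullet> X \<omega>) * (u \<bullet> u))"
    proof (rule AE_I2)
      fix \<omega>
      have "(X \<omega> \<bullet> u)\<^sup>2 \<le> (X \<omega> \<bullet> X \<omega>) * (u \<bullet> u)" by (rule Cauchy_Schwarz_ineq)
      moreover have "0 \<le> (X \<omega> \<bullet> X \<omega>) * (u \<bullet> u)" by simp
      ultimately show "norm ((X \<omega> \<bullet> u)\<^sup>2) \<le> norm ((X \<omega> \<bullet> X \<omega>) * (u \<bullet> u))" by simp
    qed
  qed
qed

theorem lemma1:
  fixes M :: "'a measure"
    and C0 bh gh bv gv :: real
    and B :: "real \<Rightarrow> 'a \<Rightarrow> real^4"
    and Phi :: "real \<Rightarrow> 'a \<Rightarrow> real^3"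
  assumes pos: "C0 > 0" "bh > 0" "gh > 0" "bv > 0" "gv > 0"
    and R0_gt: "R0 C0 bh gh bv gv > 1"
    and BM: "std_BM M B"
    and init_meas: "Phi 0 \<in> borel_measurable M"
    and init_L2: "\<forall>k. integrable M (\<lambda>\<omega>. (Phi 0 \<omega> $ k)\<^sup>2)"
    and init_indep: "prob_space.indep_set M
        {Phi 0 -` A \<inter> space M | A. A \<in> sets (borel :: (real^3) measure)}
        {(\<lambda>\<omega>. restrict (\<lambda>t. B t \<omega>) {0..}) -` A \<inter> space M | A.
           A \<in> sets (PiM {0..} (\<lambda>_. (borel :: (real^4) measure)))}"
    and cont: "\<forall>\<omega>\<in>space M. continuous_on {0..} (\<lambda>t. Phi t \<omega>)"
    and sde: "\<forall>\<omega>\<in>space M. \<forall>t\<ge>0.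
        Phi t \<omega> = Phi 0 \<omega> + integral {0..t} (\<lambda>s. C_e C0 bh gh bv gv *v Phi s \<omega>)
                   + sigma_e C0 bh gh bv gv *v B t \<omega>"
  shows "\<forall>k. filterlim (\<lambda>t. prob_space.variance M (\<lambda>\<omega>. Phi t \<omega> $ k)) at_top at_top"
proof -
  have P: "prob_space M" by (rule BM_lin(1)[OF BM])
  interpret prob_space M by (rule P)
  define ih where "ih = ih_e C0 bh gh bv gv"
  define iv where "iv = iv_e C0 bh gh bv gv"
  define sh where "sh = sh_e C0 bh gh bv gv"
  define sv where "sv = sv_e C0 bh gh bv gv"
  define C where "C = C_e C0 bh gh bv gv"
  define S where "S = sigma_e C0 bh gh bv gv"
  note eqf = equil[OF pos R0_gt, folded ih_def iv_def sh_def sv_def]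
  define \<alpha> where "\<alpha> = gh + bh * iv"
  define \<beta> where "\<beta> = bh * sh"
  define \<gamma> where "\<gamma> = bv * sv"
  define \<epsilon> where "\<epsilon> = bv * ih"
  have ap: "\<alpha> > 0" "\<beta> > 0" "\<gamma> > 0" "\<epsilon> > 0"
    using pos eqf by (auto simp: \<alpha>_def \<beta>_def \<gamma>_def \<epsilon>_def add_pos_pos)
  have bg: "\<beta> * \<gamma> = gh * gv" using eqf(5) by (simp add: \<beta>_def \<gamma>_def)
  have agb: "\<alpha> * gv - \<beta> * \<gamma> = bh * iv * gv" by (simp add: bg \<alpha>_def algebra_simps)
  have agbp: "\<alpha> * gv - \<beta> * \<gamma> > 0" unfolding agb using pos eqf by simp
  have detp: "\<alpha> * (\<epsilon> + gv) - \<beta> * \<gamma> > 0"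
  proof -
    have "\<alpha> * (\<epsilon> + gv) - \<beta> * \<gamma> = \<alpha> * \<epsilon> + (\<alpha> * gv - \<beta> * \<gamma>)" by (simp add: algebra_simps)
    then show ?thesis using agbp mult_pos_pos[OF ap(1) ap(4)] by linarith
  qed
  obtain \<mu>1 \<mu>2 where mu: "\<mu>1 \<noteq> \<mu>2" "\<mu>1 < 0" "\<mu>2 < 0"
    "(\<mu>1 + \<alpha>) * (\<mu>1 + \<epsilon> + gv) = \<beta> * \<gamma>" "(\<mu>2 + \<alpha>) * (\<mu>2 + \<epsilon> + gv) = \<beta> * \<gamma>"
    "\<mu>1 * \<mu>2 = \<alpha> * (\<epsilon> + gv) - \<beta> * \<gamma>" "\<mu>1 + \<mu>2 = - (\<alpha> + \<epsilon> + gv)"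
    using eigvals[OF ap pos(5) detp] by blast
  define k1 where "k1 = (\<mu>1 + \<alpha>) * \<epsilon> / \<mu>1"
  define k2 where "k2 = (\<mu>2 + \<alpha>) * \<epsilon> / \<mu>2"
  define u0 :: "real^3" where "u0 = vector [0, 1, 1]"
  define u1 :: "real^3" where "u1 = vector [\<gamma>, k1, \<mu>1 + \<alpha> + k1]"
  define u2 :: "real^3" where "u2 = vector [\<gamma>, k2, \<mu>2 + \<alpha> + k2]"
  have inner3: "v \<bullet> w = v$1 * w$1 + v$2 * w$2 + v$3 * w$3" for v w :: "real^3"
    by (simp add: inner_vec_def sum_3)
  note Cc = Ce_comp[of C0 bh gh bv gv, folded C_def ih_def iv_def sh_def sv_def]
  have Cc': "(C *v v) $ 1 = - \<alpha> * v$1 + \<beta> * v$3" "(C *v v) $ 2 = - \<gamma> * v$1 - \<epsilon> * v$2 + gv * v$3"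
    "(C *v v) $ 3 = \<gamma> * v$1 + \<epsilon> * v$2 - gv * v$3" for v
    using Cc[of v] by (simp_all add: \<alpha>_def \<beta>_def \<gamma>_def \<epsilon>_def)
  have eig0: "(C *v v) \<bullet> u0 = 0 * (v \<bullet> u0)" for v
    by (simp add: inner3 u0_def Cc')
  have eig1: "(C *v v) \<bullet> u1 = \<mu>1 * (v \<bullet> u1)" for v
    unfolding inner3 u1_def vector_3 Cc' using eig_alg[of \<mu>1 k1 \<alpha> \<epsilon> gv \<beta> \<gamma> "v$1" "v$3" "v$2"] mu k1_def
    by simp
  have eig2: "(C *v v) \<bullet> u2 = \<mu>2 * (v \<bullet> u2)" for v
    unfolding inner3 u2_def vector_3 Cc' using eig_alg[of \<mu>2 k2 \<alpha> \<epsilon> gv \<beta> \<gamma> "v$1" "v$3" "v$2"] mu k2_def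
    by simp
  have cw: "continuous_on {0..} (\<lambda>t. Phi t \<omega>)" if "\<omega> \<in> space M" for \<omega> using cont that by auto
  have sw: "Phi t \<omega> = Phi 0 \<omega> + integral {0..t} (\<lambda>s. C *v Phi s \<omega>) + S *v B t \<omega>"
    if "\<omega> \<in> space M" "t \<ge> 0" for \<omega> t using sde that unfolding C_def S_def by blast
  define wf where "wf u j = (\<Sum>i\<in>UNIV. S$i$j * u$i)" for u :: "real^3" and j :: 4
  have nf: "(S *v b) \<bullet> u = (\<Sum>j\<in>UNIV. wf u j * b$j)" for b u
    unfolding wf_def by (rule noise_form)
  have lp: "Phi t \<omega> \<bullet> u = Phi 0 \<omega> \<bullet> u + l * integral {0..t} (\<lambda>s. Phi s \<omega> \<bullet> u) + (\<Sum>j\<in>UNIV. wf u j * B t \<omega> $ j)"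
    if e: "\<And>v. (C *v v) \<bullet> u = l * (v \<bullet> u)" and w: "\<omega> \<in> space M" and t: "t \<ge> 0" for u l \<omega> t
    using lin_path[where Phi="\<lambda>t. Phi t \<omega>" and bt="\<lambda>t. B t \<omega>" and C=C and S=S, OF cw[OF w] sw[OF w] e t]
    by (simp add: nf)
  have ou: "\<exists>K. \<forall>t\<ge>0. (\<lambda>\<omega>. Phi t \<omega> \<bullet> u) \<in> borel_measurable M \<and> integrable M (\<lambda>\<omega>. (Phi t \<omega> \<bullet> u)\<^sup>2) \<and>
            expectation (\<lambda>\<omega>. (Phi t \<omega> \<bullet> u)\<^sup>2) \<le> K"
    if l: "l < 0" and e: "\<And>v. (C *v v) \<bullet> u = l * (v \<bullet> u)" for u l
  proof (rule ou_bound[where x="\<lambda>t \<omega>. Phi t \<omega> \<bullet> u" and bb="\<lambda>t \<omega>. \<Sum>j\<in>UNIV. wf u j * B t \<omega> $ j"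
        and c="real CARD(4) * (\<Sum>j\<in>UNIV. (wf u j)\<^sup>2)", OF P l])
    show "0 \<le> real CARD(4) * (\<Sum>j\<in>UNIV. (wf u j)\<^sup>2)" by (simp add: sum_nonneg)
    show "\<And>t. 0 \<le> t \<Longrightarrow> (\<lambda>\<omega>. \<Sum>j\<in>UNIV. wf u j * B t \<omega> $ j) \<in> borel_measurable M"
      by (rule BM_lin(2)[OF BM])
    show "\<And>\<omega>. \<omega> \<in> space M \<Longrightarrow> continuous_on {0..} (\<lambda>t. \<Sum>j\<in>UNIV. wf u j * B t \<omega> $ j)"
      by (rule BM_lin(3)[OF BM])
    show "\<And>s t. 0 \<le> s \<Longrightarrow> s \<le> t \<Longrightarrow>
        integrable M (\<lambda>\<omega>. ((\<Sum>j\<in>UNIV. wf u j * B t \<omega> $ j) - (\<Sum>j\<in>UNIV. wf u j * B s \<omega> $ j))\<^sup>2) \<and>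
        expectation (\<lambda>\<omega>. ((\<Sum>j\<in>UNIV. wf u j * B t \<omega> $ j) - (\<Sum>j\<in>UNIV. wf u j * B s \<omega> $ j))\<^sup>2)
          \<le> real CARD(4) * (\<Sum>j\<in>UNIV. (wf u j)\<^sup>2) * (t - s)"
      by (rule BM_lin(5)[OF BM])
    show "(\<lambda>\<omega>. Phi 0 \<omega> \<bullet> u) \<in> borel_measurable M" by (rule x0_sq_int(1)[OF P init_meas init_L2])
    show "integrable M (\<lambda>\<omega>. (Phi 0 \<omega> \<bullet> u)\<^sup>2)" by (rule x0_sq_int(2)[OF P init_meas init_L2])
    show "\<And>\<omega>. \<omega> \<in> space M \<Longrightarrow> continuous_on {0..} (\<lambda>t. Phi t \<omega> \<bullet> u)"
      by (intro continuous_intros cw)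
    show "\<And>\<omega> t. \<omega> \<in> space M \<Longrightarrow> 0 \<le> t \<Longrightarrow> Phi t \<omega> \<bullet> u = Phi 0 \<omega> \<bullet> u + l * integral {0..t} (\<lambda>s. Phi s \<omega> \<bullet> u)
        + (\<Sum>j\<in>UNIV. wf u j * B t \<omega> $ j)"
      by (rule lp[OF e])
  qed
  obtain K1 where K1: "\<And>t. t \<ge> 0 \<Longrightarrow> (\<lambda>\<omega>. Phi t \<omega> \<bullet> u1) \<in> borel_measurable M \<and> integrable M (\<lambda>\<omega>. (Phi t \<omega> \<bullet> u1)\<^sup>2) \<and>
            expectation (\<lambda>\<omega>. (Phi t \<omega> \<bullet> u1)\<^sup>2) \<le> K1"
    using ou[OF mu(2) eig1] by blast
  obtain K2 where K2: "\<And>t. t \<ge> 0 \<Longrightarrow> (\<lambda>\<omega>. Phi t \<omega> \<bullet> u2) \<in> borel_measurable M \<and> integrable M (\<lambda>\<omega>. (Phi t \<omega> \<bullet> u2)\<^sup>2) \<and>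
            expectation (\<lambda>\<omega>. (Phi t \<omega> \<bullet> u2)\<^sup>2) \<le> K2"
    using ou[OF mu(3) eig2] by blast
  define Y0 where "Y0 \<omega> = Phi 0 \<omega> \<bullet> u0" for \<omega>
  define W where "W t \<omega> = (\<Sum>j\<in>UNIV. wf u0 j * B t \<omega> $ j)" for t \<omega>
  have Yp: "Phi t \<omega> \<bullet> u0 = Y0 \<omega> + W t \<omega>" if w: "\<omega> \<in> space M" and t: "t \<ge> 0" for t \<omega>
    using lp[OF eig0 w t] by (simp add: Y0_def W_def)
  define p where "p = sqrt (gv * (C0 + sv))"
  define q where "q = sqrt (gv * iv)"
  have Wexp: "W t \<omega> = p * B t \<omega> $ 2 + q * B t \<omega> $ 4" for t \<omega>
  proof -
    have "W t \<omega> = (S *v B t \<omega>) \<bullet> u0" by (simp add: W_def nf)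
    also have "\<dots> = (S *v B t \<omega>) $ 2 + (S *v B t \<omega>) $ 3" by (simp add: inner3 u0_def)
    also have "\<dots> = p * B t \<omega> $ 2 + q * B t \<omega> $ 4"
      using sig_comp[of C0 bh gh bv gv "B t \<omega>", folded S_def sv_def iv_def] by (simp add: p_def q_def)
    finally show ?thesis .
  qed
  have q0: "q \<ge> 0" using pos(5) eqf(2) by (simp add: q_def)
  have pq: "q < p"
  proof -
    have "gv * iv < gv * (C0 + sv)" using pos(5) eqf(4) eqf(6) by simp
    then show ?thesis unfolding p_def q_def by (rule real_sqrt_less_mono)
  qed
  have Wf: "W t \<in> borel_measurable M \<and> integrable M (W t) \<and> expectation (W t) = 0 \<and>
      integrable M (\<lambda>\<omega>. (W t \<omega>)\<^sup>2) \<and> expectation (\<lambda>\<omega>. (W t \<omega>)\<^sup>2) \<ge> (p - q)\<^sup>2 * t" if t: "t \<ge> 0" for t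
  proof -
    have m: "W t \<in> borel_measurable M" unfolding W_def[abs_def] by (rule BM_lin(2)[OF BM t])
    have ie: "integrable M (W t) \<and> expectation (W t) = 0"
      unfolding W_def[abs_def] by (rule BM_lin(6)[OF BM t])
    have W0: "W 0 \<omega> = 0" if "\<omega> \<in> space M" for \<omega> unfolding W_def by (rule BM_lin(4)[OF BM that])
    have i2: "integrable M (\<lambda>\<omega>. (W t \<omega>)\<^sup>2)"
    proof -
      have "integrable M (\<lambda>\<omega>. (W t \<omega> - W 0 \<omega>)\<^sup>2)"
        using BM_lin(5)[OF BM order_refl t, of "wf u0"] by (simp add: W_def)
      moreover have "integrable M (\<lambda>\<omega>. (W t \<omega> - W 0 \<omega>)\<^sup>2) = integrable M (\<lambda>\<omega>. (W t \<omega>)\<^sup>2)"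
        by (rule Bochner_Integration.integrable_cong) (auto simp: W0)
      ultimately show ?thesis by simp
    qed
    note B2 = BM_coord[OF BM t, of 2] and B4 = BM_coord[OF BM t, of 4]
    have "expectation (\<lambda>\<omega>. (p - q) * (p * (B t \<omega> $ 2)\<^sup>2 - q * (B t \<omega> $ 4)\<^sup>2)) \<le> expectation (\<lambda>\<omega>. (W t \<omega>)\<^sup>2)"
    proof (rule integral_mono)
      show "integrable M (\<lambda>\<omega>. (p - q) * (p * (B t \<omega> $ 2)\<^sup>2 - q * (B t \<omega> $ 4)\<^sup>2))" using B2 B4 by simp
      show "integrable M (\<lambda>\<omega>. (W t \<omega>)\<^sup>2)" by (rule i2)
      fix \<omega>
      have "(p * B t \<omega> $ 2 + q * B t \<omega> $ 4)\<^sup>2 - (p - q) * (p * (B t \<omega> $ 2)\<^sup>2 - q * (B t \<omega> $ 4)\<^sup>2)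
          = p * q * (B t \<omega> $ 2 + B t \<omega> $ 4)\<^sup>2"
        by (simp add: power2_eq_square algebra_simps)
      moreover have "p * q * (B t \<omega> $ 2 + B t \<omega> $ 4)\<^sup>2 \<ge> 0" using pq q0 by simp
      ultimately show "(p - q) * (p * (B t \<omega> $ 2)\<^sup>2 - q * (B t \<omega> $ 4)\<^sup>2) \<le> (W t \<omega>)\<^sup>2"
        unfolding Wexp by linarith
    qed
    moreover have "expectation (\<lambda>\<omega>. (p - q) * (p * (B t \<omega> $ 2)\<^sup>2 - q * (B t \<omega> $ 4)\<^sup>2)) = (p - q)\<^sup>2 * t"
      using B2 B4 by (simp add: power2_eq_square algebra_simps)
    ultimately show ?thesis using m ie i2 by simp
  qed
  have Y0m: "Y0 \<in> borel_measurable M" unfolding Y0_def[abs_def] by (rule x0_sq_int(1)[OF P init_meas init_L2])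
  have Y0i: "integrable M (\<lambda>\<omega>. (Y0 \<omega>)\<^sup>2)" unfolding Y0_def by (rule x0_sq_int(2)[OF P init_meas init_L2])
  have kap: "(p - q)\<^sup>2 > 0" using pq by simp
  have fin: "filterlim (\<lambda>t. variance (\<lambda>\<omega>. Phi t \<omega> $ k)) at_top at_top"
    if a: "a \<noteq> 0" and X: "\<And>v::real^3. v $ k = a * (v \<bullet> u0) + c1 * (v \<bullet> u1) + c2 * (v \<bullet> u2)" for k a c1 c2
  proof (rule var_to_infty[OF P a kap Y0m Y0i Wf K1 K2])
    fix t :: real and \<omega> assume t: "t \<ge> 0" and w: "\<omega> \<in> space M"
    show "Phi t \<omega> $ k = a * (Y0 \<omega> + W t \<omega>) + c1 * (Phi t \<omega> \<bullet> u1) + c2 * (Phi t \<omega> \<bullet> u2)"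
      using X[of "Phi t \<omega>"] Yp[OF w t] by simp
  qed
  have m12: "\<mu>1 * \<mu>2 > 0" using mu(2,3) by (simp add: mult_neg_neg)
  have m1: "\<mu>1 \<noteq> 0" and m2: "\<mu>2 \<noteq> 0" using mu by auto
  have g0: "\<gamma> \<noteq> 0" using ap by simp
  note dec = decomp_alg[where \<gamma>=\<gamma> and ma=\<mu>1 and mb=\<mu>2 and ka=k1 and kb=k2 and \<alpha>=\<alpha> and \<epsilon>=\<epsilon>
      and g=gv and \<beta>=\<beta>, OF g0 mu(1) m1 m2 k1_def k2_def mu(6) mu(7)]
  show ?thesis
  proof
    fix k :: 3
    have "k = 1 \<or> k = 2 \<or> k = 3" by (rule exhaust_3)
    then show "filterlim (\<lambda>t. variance (\<lambda>\<omega>. Phi t \<omega> $ k)) at_top at_top"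
    proof (elim disjE)
      assume k: "k = 1"
      show ?thesis unfolding k
      proof (rule fin)
        show "\<beta> * \<epsilon> / (\<mu>1 * \<mu>2) \<noteq> 0" using ap m12 m1 m2 by simp
        fix v :: "real^3"
        show "v $ 1 = \<beta> * \<epsilon> / (\<mu>1 * \<mu>2) * (v \<bullet> u0) + ((1 - (\<mu>1 + \<alpha>) / (\<mu>1 - \<mu>2)) / \<gamma>) * (v \<bullet> u1)
            + (((\<mu>1 + \<alpha>) / (\<mu>1 - \<mu>2)) / \<gamma>) * (v \<bullet> u2)"
          using dec(3)[of "v$1" "v$2" "v$3"] by (simp add: inner3 u0_def u1_def u2_def)
      qed
    next
      assume k: "k = 2"
      show ?thesis unfolding k
      proof (rule fin)
        show "(\<alpha> * gv - \<beta> * \<gamma>) / (\<mu>1 * \<mu>2) \<noteq> 0" using agbp m12 m1 m2 by simp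
        fix v :: "real^3"
        show "v $ 2 = (\<alpha> * gv - \<beta> * \<gamma>) / (\<mu>1 * \<mu>2) * (v \<bullet> u0) + (- 1 / (\<mu>1 - \<mu>2)) * (v \<bullet> u1)
            + (1 / (\<mu>1 - \<mu>2)) * (v \<bullet> u2)"
          using dec(2)[of "v$2" "v$3" "v$1"] by (simp add: inner3 u0_def u1_def u2_def)
      qed
    next
      assume k: "k = 3"
      show ?thesis unfolding k
      proof (rule fin)
        show "\<alpha> * \<epsilon> / (\<mu>1 * \<mu>2) \<noteq> 0" using ap m12 m1 m2 by simp
        fix v :: "real^3"
        show "v $ 3 = \<alpha> * \<epsilon> / (\<mu>1 * \<mu>2) * (v \<bullet> u0) + (1 / (\<mu>1 - \<mu>2)) * (v \<bullet> u1)
            + (- 1 / (\<mu>1 - \<mu>2)) * (v \<bullet> u2)"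
          using dec(1)[of "v$3" "v$2" "v$1"] by (simp add: inner3 u0_def u1_def u2_def)
      qed
    qed
  qed
qed

end
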